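(* Consider the consumer-software model described in the context, with a fixed price vector $p=(p_1^{<m},p_1^{\ge m},p_2,p_S)$ and a user of type $\tau=(n_a,\delta,\gamma,v)$. (1) If the user buys the upgrade (and, if not yet owned, the base product) in some timestep $n\ge m$, then the optimal such strategy buys as soon as possible, i.e. in timestep $\max(n_a,m)$, and does not subscribe in any timestep $n\ge m$. (2) If the user has ownership vector $o$ and does not buy anything in timesteps $n\ge m$, then for the optimal such strategy there is a timestep $n_2^{o,\tau}\ge m$ such that he subscribes in every timestep $n$ with $m\le n<n_2^{o,\tau}$ in which he has demand $d=1$, and subscribes in no timestep $n\ge n_2^{o,\tau}$; moreover $n_2^{o,\tau}$ is the smallest $n\ge m$ with $v<\frac{p_S}{q((1,1)-o,\gamma,n)}$. (3) If the user, in timesteps $n\ge m$, only buys the base product (and never buys the upgrade), then for the optimal such strategy there is a timestep $n_3^{\tau}$ such that he subscribes in exactly those timesteps $n$ with $m\le n<n_3^{\tau}$ in which he has demand, and buys the base product in timestep $n_3^{\tau}$ if he still has demand; moreover $n_3^\tau$ is the smallest $n\ge m$ with $v<\frac{p_S-(1-\delta)p_1^{\ge m}}{q((0,1),\gamma,n)}$.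
   Context: Model. Time is discrete with timesteps $n=1,2,\dots$. Fixed parameters: integers $m\ge1$ (release timestep of an upgrade) and $n_{max}\ge1$, qualities $q_1,q_2>0$, and $v_{max}>0$. A publisher fixes a price vector $p=(p_1^{<m},p_1^{\ge m},p_2,p_S)\in[0,\infty]^4$ (a price $\infty$ means the option is not offered). In timestep $n$ the base product can be bought for $p_1^n$, where $p_1^n=p_1^{<m}$ if $n<m$ and $p_1^n=p_1^{\ge m}$ if $n\ge m$; the upgrade can be bought for $p_2$ only in timesteps $n\ge m$; a subscription costs $p_S$ per timestep. A user has type $\tau=(n_a,\delta,\gamma,v)$: arrival timestep $n_a\in\{1,\dots,n_{max}\}$, engagement factor $\delta\in(0,1)$, quality decay factor $\gamma\in(0,1)$, value $v\in[0,v_{max}]$. His state is $\sigma=(d,o)$ with demand $d\in\{0,1\}$ and ownership vector $o=(o_1,o_2)\in\{0,1\}^2$ ($o_1=1$: owns base product; $o_2=1$: owns upgrade). He is present (and acts) only from timestep $n_a$ on, starting in state $(1,(0,0))$. In each timestep $n\ge n_a$ he chooses an action $(S,b)$, $S\in\{0,1\}$ (subscribe in this timestep), $b=(b_1,b_2)\in\{0,1\}^2$ (buy base product / upgrade; $b_2=1$ only possible if $n\ge m$). Buying changes ownership to the componentwise maximum $\max(o,b)$. Subscribing in timestep $n$ gives access to $o_S^n=(1,0)$ if $n<m$ and $o_S^n=(1,1)$ if $n\ge m$. The realized quality of access vector $o$ in timestep $n$ is $q(o,\gamma,n)=o_1\gamma^{n}q_1+o_2\gamma^{n-m}q_2$.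 Immediate normalized reward: $w_n=d\big((1-S)\,q(\max(o,b),\gamma,n)+S\,q(o_S^n,\gamma,n)\big)$; immediate payment: $\rho_n=p_SS+p_1^nb_1+p_2b_2$; immediate utility $v w_n-\rho_n$. Demand dynamics: in every timestep in which the user uses the product (has demand and has access via ownership or subscription) he loses demand ($d$ becomes $0$) with probability $1-\delta$; in timestep $m$ a user with $d=0$ regains demand $d=1$ with probability $\delta$; otherwise demand does not change. A strategy $\alpha$ maps (timestep, state) to an action. Expected normalized reward $w(\alpha,\tau)=\sum_{n\ge n_a}\mathbb E[w_n]$, expected payment $\rho(\alpha,\tau,p)=\sum_{n\ge n_a}\mathbb E[\rho_n]$, expected utility $u(\alpha,\tau)=v\,w(\alpha,\tau)-\rho(\alpha,\tau,p)$; "optimal" means maximizing $u$. *)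

theory Defs
  imports "HOL-Analysis.Analysis"
begin

(* State sigma = (d, o1, o2): demand d, ownership vector o = (o1, o2).
   Action a = (S, b1, b2): subscribe S, buy base product b1, buy upgrade b2.
   Booleans encode {0,1}. *)
type_synonym state = "bool \<times> bool \<times> bool"
type_synonym action = "bool \<times> bool \<times> bool"
type_synonym strategy = "nat \<Rightarrow> state \<Rightarrow> action"
(* user type tau = (n_a, delta, gamma, v) *)
type_synonym utype = "nat \<times> real \<times> real \<times> real"
(* price vector p = (p1_{<m}, p1_{>=m}, p2, pS), entries in [0,\<infinity>] *)
type_synonym prices = "ennreal \<times> ennreal \<times> ennreal \<times> ennreal"

definition own :: "state \<Rightarrow> bool \<times> bool" where
  "own \<sigma> = snd \<sigma>"

definition dem :: "state \<Rightarrow> bool" where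
  "dem \<sigma> = fst \<sigma>"

definition subs :: "action \<Rightarrow> bool" where
  "subs a = fst a"

definition buy1 :: "action \<Rightarrow> bool" where
  "buy1 a = fst (snd a)"

definition buy2 :: "action \<Rightarrow> bool" where
  "buy2 a = snd (snd a)"

definition compl_own :: "bool \<times> bool \<Rightarrow> bool \<times> bool" where
  "compl_own o' = (\<not> fst o', \<not> snd o')"

definition qual :: "nat \<Rightarrow> real \<Rightarrow> real \<Rightarrow> real \<Rightarrow> bool \<times> bool \<Rightarrow> nat \<Rightarrow> real" where
  "qual m q1 q2 \<gamma> o' n =
     of_bool (fst o') * \<gamma> ^ n * q1 + of_bool (snd o') * \<gamma> powi (int n - int m) * q2"

(* access vector granted by a subscription in timestep n *)
definition oS :: "nat \<Rightarrow> nat \<Rightarrow> bool \<times> bool" where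
  "oS m n = (True, m \<le> n)"

definition reward :: "nat \<Rightarrow> real \<Rightarrow> real \<Rightarrow> real \<Rightarrow> nat \<Rightarrow> state \<Rightarrow> action \<Rightarrow> real" where
  "reward m q1 q2 \<gamma> n \<sigma> a =
     of_bool (dem \<sigma>) *
       (if subs a then qual m q1 q2 \<gamma> (oS m n) n
        else qual m q1 q2 \<gamma> (fst (own \<sigma>) \<or> buy1 a, snd (own \<sigma>) \<or> buy2 a) n)"

definition price1 :: "nat \<Rightarrow> prices \<Rightarrow> nat \<Rightarrow> ennreal" where
  "price1 m p n = (if n < m then fst p else fst (snd p))"

definition price2 :: "prices \<Rightarrow> ennreal" where
  "price2 p = fst (snd (snd p))"

definition priceS :: "prices \<Rightarrow> ennreal" where
  "priceS p = snd (snd (snd p))"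

definition payment :: "nat \<Rightarrow> prices \<Rightarrow> nat \<Rightarrow> action \<Rightarrow> ennreal" where
  "payment m p n a =
     (if subs a then priceS p else 0) + (if buy1 a then price1 m p n else 0)
     + (if buy2 a then price2 p else 0)"

(* Probability of being in state sigma' at timestep n+1, given state sigma and action a
   in timestep n.  On entering timestep m, a user with d = 0 regains
   demand with probability delta. *)
definition trans :: "nat \<Rightarrow> real \<Rightarrow> nat \<Rightarrow> state \<Rightarrow> action \<Rightarrow> state \<Rightarrow> real" where
  "trans m \<delta> n \<sigma> a \<sigma>' =
     (let o1 = fst (own \<sigma>) \<or> buy1 a;
          o2 = snd (own \<sigma>) \<or> buy2 a;
          used = dem \<sigma> \<and> (subs a \<or> o1 \<or> o2);
          pd = (if used then \<delta> else of_bool (dem \<sigma>));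
          pd' = (if Suc n = m then pd + (1 - pd) * \<delta> else pd)
      in if own \<sigma>' = (o1, o2) then (if dem \<sigma>' then pd' else 1 - pd') else 0)"

(* dist m delta alpha n_a k sigma = probability of being in state sigma in timestep n_a + k *)
primrec dist :: "nat \<Rightarrow> real \<Rightarrow> strategy \<Rightarrow> nat \<Rightarrow> nat \<Rightarrow> state \<Rightarrow> real" where
  "dist m \<delta> \<alpha> na 0 = (\<lambda>\<sigma>. if \<sigma> = (True, False, False) then 1 else 0)"
| "dist m \<delta> \<alpha> na (Suc k) = (\<lambda>\<sigma>'. \<Sum>\<sigma>\<in>UNIV.
      dist m \<delta> \<alpha> na k \<sigma> * trans m \<delta> (na + k) \<sigma> (\<alpha> (na + k) \<sigma>) \<sigma>')"

definition arr :: "utype \<Rightarrow> nat" where "arr \<tau> = fst \<tau>"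
definition eng :: "utype \<Rightarrow> real" where "eng \<tau> = fst (snd \<tau>)"
definition dec :: "utype \<Rightarrow> real" where "dec \<tau> = fst (snd (snd \<tau>))"
definition val :: "utype \<Rightarrow> real" where "val \<tau> = snd (snd (snd \<tau>))"

definition reach :: "nat \<Rightarrow> utype \<Rightarrow> strategy \<Rightarrow> nat \<Rightarrow> state \<Rightarrow> bool" where
  "reach m \<tau> \<alpha> n \<sigma> \<longleftrightarrow> arr \<tau> \<le> n \<and> dist m (eng \<tau>) \<alpha> (arr \<tau>) (n - arr \<tau>) \<sigma> > 0"

definition exp_reward :: "nat \<Rightarrow> real \<Rightarrow> real \<Rightarrow> utype \<Rightarrow> strategy \<Rightarrow> real" where
  "exp_reward m q1 q2 \<tau> \<alpha> =
     (\<Sum>k. \<Sum>\<sigma>\<in>UNIV. dist m (eng \<tau>) \<alpha> (arr \<tau>) k \<sigma> *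
        reward m q1 q2 (dec \<tau>) (arr \<tau> + k) \<sigma> (\<alpha> (arr \<tau> + k) \<sigma>))"

definition exp_payment :: "nat \<Rightarrow> prices \<Rightarrow> utype \<Rightarrow> strategy \<Rightarrow> ennreal" where
  "exp_payment m p \<tau> \<alpha> =
     (\<Sum>k. \<Sum>\<sigma>\<in>UNIV. ennreal (dist m (eng \<tau>) \<alpha> (arr \<tau>) k \<sigma>) *
        payment m p (arr \<tau> + k) (\<alpha> (arr \<tau> + k) \<sigma>))"

definition utility :: "nat \<Rightarrow> real \<Rightarrow> real \<Rightarrow> prices \<Rightarrow> utype \<Rightarrow> strategy \<Rightarrow> ereal" where
  "utility m q1 q2 p \<tau> \<alpha> =
     ereal (val \<tau> * exp_reward m q1 q2 \<tau> \<alpha>) - enn2ereal (exp_payment m p \<tau> \<alpha>)"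

definition admissible :: "nat \<Rightarrow> strategy \<Rightarrow> bool" where
  "admissible m \<alpha> \<longleftrightarrow> (\<forall>n \<sigma>. n < m \<longrightarrow> \<not> buy2 (\<alpha> n \<sigma>))"

definition optimal_in :: "strategy set \<Rightarrow> (strategy \<Rightarrow> ereal) \<Rightarrow> strategy \<Rightarrow> bool" where
  "optimal_in C u \<alpha> \<longleftrightarrow> \<alpha> \<in> C \<and> (\<forall>\<beta>\<in>C. u \<beta> \<le> u \<alpha>)"

(* Class (1): the user buys the upgrade (and the base product, if not yet owned) in some
   timestep n >= m: from some timestep on he owns (1,1) in every reachable state. *)
definition class_upgrade :: "nat \<Rightarrow> utype \<Rightarrow> strategy set" where
  "class_upgrade m \<tau> = {\<alpha>. admissible m \<alpha> \<and>
     (\<exists>N \<ge> arr \<tau>. \<forall>\<sigma>. reach m \<tau> \<alpha> N \<sigma> \<longrightarrow> own \<sigma> = (True, True))}"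

definition class_nobuy :: "nat \<Rightarrow> utype \<Rightarrow> bool \<times> bool \<Rightarrow> strategy set" where
  "class_nobuy m \<tau> o' = {\<alpha>. admissible m \<alpha> \<and>
     (\<forall>n \<ge> m. \<forall>\<sigma>. reach m \<tau> \<alpha> n \<sigma> \<longrightarrow>
        own \<sigma> = o' \<and> \<not> buy1 (\<alpha> n \<sigma>) \<and> \<not> buy2 (\<alpha> n \<sigma>))}"

(* Class (3): in timesteps n >= m only the base product is bought (never the upgrade):
   the base product is not owned at timestep max(n_a,m), and from some timestep on every
   reachable state with demand owns the base product. *)
definition class_base :: "nat \<Rightarrow> utype \<Rightarrow> strategy set" where
  "class_base m \<tau> = {\<alpha>. admissible m \<alpha> \<and>
     (\<forall>n \<ge> m. \<forall>\<sigma>. reach m \<tau> \<alpha> n \<sigma> \<longrightarrow> \<not> buy2 (\<alpha> n \<sigma>)) \<and>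
     (\<forall>\<sigma>. reach m \<tau> \<alpha> (max (arr \<tau>) m) \<sigma> \<longrightarrow> \<not> fst (own \<sigma>)) \<and>
     (\<exists>N \<ge> arr \<tau>. \<forall>\<sigma>. reach m \<tau> \<alpha> N \<sigma> \<longrightarrow> dem \<sigma> \<longrightarrow> fst (own \<sigma>))}"

definition n2 :: "nat \<Rightarrow> real \<Rightarrow> real \<Rightarrow> prices \<Rightarrow> utype \<Rightarrow> bool \<times> bool \<Rightarrow> enat" where
  "n2 m q1 q2 p \<tau> o' =
     (let P = (\<lambda>n. m \<le> n \<and>
                ennreal (val \<tau>) < priceS p / ennreal (qual m q1 q2 (dec \<tau>) (compl_own o') n))
      in if \<exists>n. P n then enat (LEAST n. P n) else \<infinity>)"

(* condition defining n_3^tau: v < (pS - (1-delta) p1_{>=m}) / q((0,1), gamma, n) *)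
definition cond3 :: "nat \<Rightarrow> real \<Rightarrow> real \<Rightarrow> prices \<Rightarrow> utype \<Rightarrow> nat \<Rightarrow> bool" where
  "cond3 m q1 q2 p \<tau> n \<longleftrightarrow> m \<le> n \<and>
     ennreal (val \<tau>) < (priceS p - ennreal (1 - eng \<tau>) * fst (snd p))
                        / ennreal (qual m q1 q2 (dec \<tau>) (False, True) n)"

end

theory Submission
  imports Defs
begin

lemma sum_state: "(\<Sum>\<sigma>\<in>(UNIV::state set). f \<sigma>) = f (True,True,True) + f (True,True,False) + f (True,False,True) + f (True,False,False) + f (False,True,True) + f (False,True,False) + f (False,False,True) + f (False,False,False)"
  by (simp add: UNIV_Times_UNIV[symmetric] UNIV_bool sum.cartesian_product[symmetric] ac_simps del: UNIV_Times_UNIV)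

locale mdl =
  fixes m :: nat and q1 q2 \<delta> \<gamma> v :: real and na :: nat
  assumes d0: "0 < \<delta>" and d1: "\<delta> < 1" and g0: "0 < \<gamma>" and g1: "\<gamma> < 1"
    and q1: "0 < q1" and q2: "0 < q2" and v0: "0 \<le> v"
begin

abbreviation ds where "ds \<alpha> k \<sigma> \<equiv> dist m \<delta> \<alpha> na k \<sigma>"
abbreviation tr where "tr n \<sigma> a \<sigma>' \<equiv> trans m \<delta> n \<sigma> a \<sigma>'"
abbreviation tau where "tau \<equiv> (na, \<delta>, \<gamma>, v)"
abbreviation rch where "rch \<alpha> n \<sigma> \<equiv> reach m tau \<alpha> n \<sigma>"

lemma tau_simps[simp]: "arr tau = na" "eng tau = \<delta>" "dec tau = \<gamma>" "val tau = v"
  by (simp_all add: arr_def eng_def dec_def val_def)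

lemma dd: "\<delta> * 2 \<le> 1 + \<delta> * \<delta>"
proof -
  have "0 \<le> (1-\<delta>)^2" by simp
  then show ?thesis by (simp add: power2_eq_square algebra_simps)
qed

lemma trans_nonneg: "0 \<le> tr n \<sigma> a \<sigma>'"
  using d0 d1 dd unfolding trans_def Let_def
  by (auto simp: algebra_simps intro: mult_nonneg_nonneg)

lemma trans_le1: "tr n \<sigma> a \<sigma>' \<le> 1"
  using d0 d1 dd unfolding trans_def Let_def
  by (auto simp: algebra_simps intro: mult_nonneg_nonneg)

lemma sum_own_dem: "(\<Sum>\<sigma>'\<in>UNIV. (if own \<sigma>' = o' then (if dem \<sigma>' then x else 1 - x) else 0) * g \<sigma>') = x * g (True, o') + (1 - x) * (g (False, o') :: real)"
  by (cases o') (simp add: sum_state own_def dem_def)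

lemma sum_own_dem1: "(\<Sum>\<sigma>'\<in>UNIV. (if own \<sigma>' = o' then (if dem \<sigma>' then x else 1 - x) else 0)) = (1::real)"
  using sum_own_dem[of o' x "\<lambda>_. 1"] by simp

lemma trans_sum: "(\<Sum>\<sigma>'\<in>UNIV. tr n \<sigma> a \<sigma>') = 1"
  unfolding trans_def Let_def by (rule sum_own_dem1)

definition pdn :: "state \<Rightarrow> action \<Rightarrow> real" where
  "pdn \<sigma> a = (if dem \<sigma> \<and> (subs a \<or> (fst (own \<sigma>) \<or> buy1 a) \<or> (snd (own \<sigma>) \<or> buy2 a)) then \<delta> else of_bool (dem \<sigma>))"

lemma exp_next: "Suc n \<noteq> m \<Longrightarrow> (\<Sum>\<sigma>'\<in>UNIV. tr n \<sigma> a \<sigma>' * g \<sigma>') =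
   pdn \<sigma> a * g (True, fst (own \<sigma>) \<or> buy1 a, snd (own \<sigma>) \<or> buy2 a) + (1 - pdn \<sigma> a) * g (False, fst (own \<sigma>) \<or> buy1 a, snd (own \<sigma>) \<or> buy2 a)"
  unfolding trans_def Let_def pdn_def[symmetric] by (simp only: if_False sum_own_dem)

lemma dist_nonneg: "0 \<le> ds \<alpha> k \<sigma>"
  by (induction k arbitrary: \<sigma>) (auto intro!: sum_nonneg mult_nonneg_nonneg trans_nonneg)

lemma dist_sum: "(\<Sum>\<sigma>\<in>UNIV. ds \<alpha> k \<sigma>) = 1"
proof (induction k)
  case 0 then show ?case by (simp add: sum.delta)
next
  case (Suc k)
  have "(\<Sum>\<sigma>'\<in>UNIV. ds \<alpha> (Suc k) \<sigma>') = (\<Sum>\<sigma>\<in>UNIV. ds \<alpha> k \<sigma> * (\<Sum>\<sigma>'\<in>UNIV. tr (na+k) \<sigma> (\<alpha> (na+k) \<sigma>) \<sigma>'))"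
    by (simp add: sum_distrib_left) (rule sum.swap)
  also have "\<dots> = 1" using Suc by (simp add: trans_sum)
  finally show ?case .
qed

lemma dist_le1: "ds \<alpha> k \<sigma> \<le> 1"
proof -
  have "ds \<alpha> k \<sigma> \<le> (\<Sum>\<sigma>\<in>UNIV. ds \<alpha> k \<sigma>)"
    by (rule member_le_sum) (auto simp: dist_nonneg)
  then show ?thesis by (simp add: dist_sum)
qed

lemma step_exp: "(\<Sum>\<sigma>'\<in>UNIV. ds \<alpha> (Suc k) \<sigma>' * g \<sigma>') = (\<Sum>\<sigma>\<in>UNIV. ds \<alpha> k \<sigma> * (\<Sum>\<sigma>'\<in>UNIV. tr (na+k) \<sigma> (\<alpha> (na+k) \<sigma>) \<sigma>' * g \<sigma>'))"
  by (simp add: sum_distrib_left sum_distrib_right mult.assoc) (rule sum.swap)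

lemma reach_iff: "rch \<alpha> n \<sigma> \<longleftrightarrow> na \<le> n \<and> 0 < ds \<alpha> (n - na) \<sigma>"
  by (simp add: reach_def)

lemma reach_init: "rch \<alpha> na \<sigma> \<longleftrightarrow> \<sigma> = (True, False, False)"
  by (simp add: reach_def)

lemma reach_step:
  assumes "rch \<alpha> (Suc n) \<sigma>'" "na \<le> n"
  shows "\<exists>\<sigma>. rch \<alpha> n \<sigma> \<and> 0 < tr n \<sigma> (\<alpha> n \<sigma>) \<sigma>'"
proof (rule ccontr)
  assume "\<not> ?thesis"
  then have "\<And>\<sigma>. ds \<alpha> (n - na) \<sigma> * tr n \<sigma> (\<alpha> n \<sigma>) \<sigma>' \<le> 0"
    using assms(2) dist_nonneg trans_nonneg
    by (metis (no_types, lifting) mult_eq_0_iff order.strict_iff_order reach_iff)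
  then have "(\<Sum>\<sigma>\<in>UNIV. ds \<alpha> (n - na) \<sigma> * tr n \<sigma> (\<alpha> n \<sigma>) \<sigma>') \<le> 0"
    by (simp add: sum_nonpos)
  moreover have "Suc n - na = Suc (n - na)" "na + (n - na) = n" using assms(2) by auto
  ultimately show False using assms(1) by (simp add: reach_iff)
qed

lemma reach_next:
  assumes "rch \<alpha> n \<sigma>" "0 < tr n \<sigma> (\<alpha> n \<sigma>) \<sigma>'"
  shows "rch \<alpha> (Suc n) \<sigma>'"
proof -
  have n: "na \<le> n" "Suc n - na = Suc (n - na)" "na + (n - na) = n" using assms(1) by (auto simp: reach_iff)
  have "0 < (\<Sum>s\<in>UNIV. ds \<alpha> (n - na) s * tr n s (\<alpha> n s) \<sigma>')"
    by (rule sum_pos2[where i=\<sigma>]) (use assms n in \<open>auto simp: reach_iff intro!: mult_nonneg_nonneg dist_nonneg trans_nonneg\<close>)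
  then show ?thesis using n by (simp add: reach_iff)
qed

lemma reach_ex: "na \<le> n \<Longrightarrow> \<exists>\<sigma>. rch \<alpha> n \<sigma>"
proof (rule ccontr)
  assume "na \<le> n" "\<nexists>\<sigma>. rch \<alpha> n \<sigma>"
  then have "\<And>\<sigma>. ds \<alpha> (n - na) \<sigma> = 0" using dist_nonneg by (metis order.not_eq_order_implies_strict reach_iff)
  then show False using dist_sum[of \<alpha> "n - na"] by simp
qed

lemma trans_pos_own: "0 < tr n \<sigma> a \<sigma>' \<Longrightarrow> own \<sigma>' = (fst (own \<sigma>) \<or> buy1 a, snd (own \<sigma>) \<or> buy2 a)"
  unfolding trans_def Let_def by (auto split: if_splits)

lemma trans_pos_dem: "0 < tr n \<sigma> a \<sigma>' \<Longrightarrow> Suc n \<noteq> m \<Longrightarrow> \<not> dem \<sigma> \<Longrightarrow> \<not> dem \<sigma>'"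
  unfolding trans_def Let_def by (auto split: if_splits)

lemma trans_pos_succ: "dem \<sigma> \<or> Suc n = m \<Longrightarrow> 0 < tr n \<sigma> a (True, fst (own \<sigma>) \<or> buy1 a, snd (own \<sigma>) \<or> buy2 a)"
  using d0 d1 unfolding trans_def Let_def
  by (auto simp: own_def dem_def algebra_simps intro: add_pos_nonneg mult_nonneg_nonneg)

lemma dist_splice: "(\<And>n \<sigma>. n < na + K \<Longrightarrow> \<alpha> n \<sigma> = \<beta> n \<sigma>) \<Longrightarrow> k \<le> K \<Longrightarrow> ds \<alpha> k = ds \<beta> k"
  by (induction k) auto

end

context mdl begin

definition Q1 :: "nat \<Rightarrow> real" where "Q1 n = \<gamma> ^ n * q1"
definition Q2 :: "nat \<Rightarrow> real" where "Q2 n = \<gamma> powi (int n - int m) * q2"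
definition Cq :: real where "Cq = q1 + q2 / \<gamma> ^ m"

lemma qual_eq: "qual m q1 q2 \<gamma> (o1, o2) n = of_bool o1 * Q1 n + of_bool o2 * Q2 n"
  by (simp add: qual_def Q1_def Q2_def)

lemma Q1_pos: "0 < Q1 n" using g0 q1 by (simp add: Q1_def)

lemma powi_pos: "0 < \<gamma> powi k"
  using g0 by (simp add: power_int_def)

lemma Q2_pos: "0 < Q2 n" using q2 powi_pos by (simp add: Q2_def)

lemma Q1_Suc: "Q1 (Suc n) = \<gamma> * Q1 n" by (simp add: Q1_def)

lemma Q2_Suc: "Q2 (Suc n) = \<gamma> * Q2 n"
proof -
  have e: "int (Suc n) - int m = (int n - int m) + 1" by simp
  have "\<gamma> powi ((int n - int m) + 1) = \<gamma> powi (int n - int m) * \<gamma>"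
    by (rule power_int_add_1) (use g0 in auto)
  then have "\<gamma> powi (int (Suc n) - int m) = \<gamma> powi (int n - int m) * \<gamma>"
    by (subst e)
  then show ?thesis by (simp add: Q2_def)
qed

lemma Q2_eq: "Q2 n = \<gamma> ^ n * (q2 / \<gamma> ^ m)"
proof -
  have "\<gamma> powi (int n - int m) = \<gamma> powi (int n) / \<gamma> powi (int m)"
    using g0 by (simp add: power_int_diff)
  then show ?thesis by (simp add: Q2_def)
qed

lemma Q_le: "Q1 n + Q2 n \<le> Cq * \<gamma> ^ n"
  by (simp add: Q1_def Q2_eq Cq_def algebra_simps)

lemma qual_nonneg: "0 \<le> qual m q1 q2 \<gamma> o' n"
  using Q1_pos[of n] Q2_pos[of n] by (cases o') (simp add: qual_eq)

lemma qual_le: "qual m q1 q2 \<gamma> o' n \<le> Cq * \<gamma> ^ n"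
  using Q1_pos[of n] Q2_pos[of n] Q_le[of n] by (cases o') (auto simp: qual_eq)

lemma reward_nonneg: "0 \<le> reward m q1 q2 \<gamma> n \<sigma> a"
  by (simp add: reward_def qual_nonneg)

lemma reward_le: "reward m q1 q2 \<gamma> n \<sigma> a \<le> Cq * \<gamma> ^ n"
proof -
  have "0 \<le> Cq * \<gamma> ^ n" using qual_nonneg qual_le order.trans by blast
  then show ?thesis by (auto simp: reward_def qual_le)
qed

definition rk :: "strategy \<Rightarrow> nat \<Rightarrow> real" where
  "rk \<alpha> k = (\<Sum>\<sigma>\<in>UNIV. ds \<alpha> k \<sigma> * reward m q1 q2 \<gamma> (na+k) \<sigma> (\<alpha> (na+k) \<sigma>))"

lemma rk_nonneg: "0 \<le> rk \<alpha> k"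
  unfolding rk_def by (intro sum_nonneg mult_nonneg_nonneg dist_nonneg reward_nonneg)

lemma rk_le: "rk \<alpha> k \<le> Cq * \<gamma> ^ (na + k)"
proof -
  have "rk \<alpha> k \<le> (\<Sum>\<sigma>\<in>UNIV. ds \<alpha> k \<sigma> * (Cq * \<gamma> ^ (na + k)))"
    unfolding rk_def by (intro sum_mono mult_left_mono reward_le dist_nonneg)
  also have "\<dots> = Cq * \<gamma> ^ (na + k)" by (simp add: sum_distrib_right[symmetric] dist_sum)
  finally show ?thesis .
qed

lemma summable_rk: "summable (rk \<alpha>)"
proof (rule summable_comparison_test)
  show "\<exists>N. \<forall>n\<ge>N. norm (rk \<alpha> n) \<le> Cq * \<gamma> ^ na * \<gamma> ^ n"
    using rk_le rk_nonneg by (auto simp: power_add mult.assoc)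
  show "summable (\<lambda>n. Cq * \<gamma> ^ na * \<gamma> ^ n)"
    using g0 g1 by (intro summable_mult summable_geometric) auto
qed

lemma exp_reward_eq: "exp_reward m q1 q2 tau \<alpha> = suminf (rk \<alpha>)"
  by (simp add: exp_reward_def rk_def[abs_def])

abbreviation pay where "pay p \<alpha> n \<sigma> \<equiv> payment m p n (\<alpha> n \<sigma>)"

definition pk :: "prices \<Rightarrow> strategy \<Rightarrow> nat \<Rightarrow> real" where
  "pk p \<alpha> k = (\<Sum>\<sigma>\<in>UNIV. ds \<alpha> k \<sigma> * enn2real (pay p \<alpha> (na+k) \<sigma>))"

lemma pk_nonneg: "0 \<le> pk p \<alpha> k"
  unfolding pk_def by (intro sum_nonneg mult_nonneg_nonneg dist_nonneg enn2real_nonneg)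

lemma exp_payment_eq: "exp_payment m p tau \<alpha> = (\<Sum>k. \<Sum>\<sigma>\<in>UNIV. ennreal (ds \<alpha> k \<sigma>) * pay p \<alpha> (na+k) \<sigma>)"
  by (simp add: exp_payment_def)

lemma pay_fin_reach:
  assumes "exp_payment m p tau \<alpha> \<noteq> top" "0 < ds \<alpha> k \<sigma>"
  shows "pay p \<alpha> (na+k) \<sigma> \<noteq> top"
proof
  assume inf: "pay p \<alpha> (na+k) \<sigma> = top"
  let ?t = "\<lambda>k. \<Sum>\<sigma>\<in>UNIV. ennreal (ds \<alpha> k \<sigma>) * pay p \<alpha> (na+k) \<sigma>"
  have lt: "(\<Sum>k. ?t k) < top"
    using assms(1) unfolding exp_payment_eq by (simp add: less_top[symmetric])
  have a: "?t k < top"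
    using ennreal_suminf_lessD[OF lt] by blast
  have b: "ennreal (ds \<alpha> k \<sigma>) * pay p \<alpha> (na+k) \<sigma> \<le> ?t k"
    by (intro member_le_sum) simp_all
  have c: "ennreal (ds \<alpha> k \<sigma>) * pay p \<alpha> (na+k) \<sigma> = top"
    using inf assms(2) by (simp add: ennreal_mult_top)
  show False using a b c by (metis leD)
qed

lemma pay_conv:
  assumes "\<And>k \<sigma>. 0 < ds \<alpha> k \<sigma> \<Longrightarrow> pay p \<alpha> (na+k) \<sigma> \<noteq> top"
  shows "exp_payment m p tau \<alpha> = (\<Sum>k. ennreal (pk p \<alpha> k))"
proof -
  have "(\<Sum>\<sigma>\<in>UNIV. ennreal (ds \<alpha> k \<sigma>) * pay p \<alpha> (na+k) \<sigma>) = ennreal (pk p \<alpha> k)" for k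
  proof -
    have "ennreal (ds \<alpha> k \<sigma>) * pay p \<alpha> (na+k) \<sigma> = ennreal (ds \<alpha> k \<sigma> * enn2real (pay p \<alpha> (na+k) \<sigma>))" for \<sigma>
    proof (cases "ds \<alpha> k \<sigma> = 0")
      case True then show ?thesis by simp
    next
      case False
      then have "0 < ds \<alpha> k \<sigma>" using dist_nonneg order_le_neq_trans by metis
      then have "pay p \<alpha> (na+k) \<sigma> < top" using assms by (simp add: less_top[symmetric])
      then show ?thesis using dist_nonneg by (simp add: ennreal_mult)
    qed
    then show ?thesis unfolding pk_def
      by (simp add: dist_nonneg enn2real_nonneg)
  qed
  then show ?thesis by (simp add: exp_payment_eq)
qed

lemma utility_inf: "exp_payment m p tau \<alpha> = top \<Longrightarrow> utility m q1 q2 p tau \<alpha> = -\<infinity>"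
  by (simp add: utility_def)

lemma utility_fin:
  assumes "\<And>k \<sigma>. 0 < ds \<alpha> k \<sigma> \<Longrightarrow> pay p \<alpha> (na+k) \<sigma> \<noteq> top" "summable (pk p \<alpha>)"
  shows "utility m q1 q2 p tau \<alpha> = ereal (v * suminf (rk \<alpha>) - suminf (pk p \<alpha>))"
proof -
  have "exp_payment m p tau \<alpha> = ennreal (suminf (pk p \<alpha>))"
    using pay_conv[OF assms(1)] suminf_ennreal2[OF pk_nonneg assms(2)] by simp
  moreover have "0 \<le> suminf (pk p \<alpha>)" using assms(2) pk_nonneg by (simp add: suminf_nonneg)
  ultimately show ?thesis by (simp add: utility_def exp_reward_eq)
qed

lemma utility_fin':
  assumes "exp_payment m p tau \<alpha> \<noteq> top"
  shows "summable (pk p \<alpha>)" "utility m q1 q2 p tau \<alpha> = ereal (v * suminf (rk \<alpha>) - suminf (pk p \<alpha>))"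
proof -
  have f: "\<And>k \<sigma>. 0 < ds \<alpha> k \<sigma> \<Longrightarrow> pay p \<alpha> (na+k) \<sigma> \<noteq> top" using pay_fin_reach assms by blast
  show s: "summable (pk p \<alpha>)"
    using pay_conv[OF f] assms by (intro summable_suminf_not_top pk_nonneg) simp
  show "utility m q1 q2 p tau \<alpha> = ereal (v * suminf (rk \<alpha>) - suminf (pk p \<alpha>))"
    by (rule utility_fin[OF f s])
qed

definition EE :: "strategy \<Rightarrow> (nat \<Rightarrow> state \<Rightarrow> real) \<Rightarrow> nat \<Rightarrow> real" where
  "EE \<alpha> \<Psi> k = (\<Sum>\<sigma>\<in>UNIV. ds \<alpha> k \<sigma> * \<Psi> (na+k) \<sigma>)"

definition XX :: "strategy \<Rightarrow> (nat \<Rightarrow> state \<Rightarrow> real) \<Rightarrow> nat \<Rightarrow> real" where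
  "XX \<alpha> f k = (\<Sum>\<sigma>\<in>UNIV. ds \<alpha> k \<sigma> * f (na+k) \<sigma>)"

definition Bel :: "strategy \<Rightarrow> (nat \<Rightarrow> state \<Rightarrow> real) \<Rightarrow> (nat \<Rightarrow> state \<Rightarrow> real) \<Rightarrow> nat \<Rightarrow> state \<Rightarrow> real" where
  "Bel \<alpha> f \<Psi> n \<sigma> = f n \<sigma> + (\<Sum>\<sigma>'\<in>UNIV. tr n \<sigma> (\<alpha> n \<sigma>) \<sigma>' * \<Psi> (Suc n) \<sigma>')"

lemma one_step_le:
  assumes "\<And>\<sigma>. 0 < ds \<alpha> k \<sigma> \<Longrightarrow> Bel \<alpha> f \<Psi> (na+k) \<sigma> \<le> \<Psi> (na+k) \<sigma>"
  shows "XX \<alpha> f k + EE \<alpha> \<Psi> (Suc k) \<le> EE \<alpha> \<Psi> k"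
proof -
  have "XX \<alpha> f k + EE \<alpha> \<Psi> (Suc k) = (\<Sum>\<sigma>\<in>UNIV. ds \<alpha> k \<sigma> * Bel \<alpha> f \<Psi> (na+k) \<sigma>)"
  proof -
    have "EE \<alpha> \<Psi> (Suc k) = (\<Sum>\<sigma>\<in>UNIV. ds \<alpha> k \<sigma> * (\<Sum>\<sigma>'\<in>UNIV. tr (na+k) \<sigma> (\<alpha> (na+k) \<sigma>) \<sigma>' * \<Psi> (Suc (na+k)) \<sigma>'))"
      unfolding EE_def by (simp only: step_exp add_Suc_right)
    then show ?thesis unfolding XX_def Bel_def EE_def
      by (simp add: sum.distrib distrib_left)
  qed
  also have "\<dots> \<le> (\<Sum>\<sigma>\<in>UNIV. ds \<alpha> k \<sigma> * \<Psi> (na+k) \<sigma>)"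
  proof (rule sum_mono)
    fix \<sigma>
    show "ds \<alpha> k \<sigma> * Bel \<alpha> f \<Psi> (na+k) \<sigma> \<le> ds \<alpha> k \<sigma> * \<Psi> (na+k) \<sigma>"
    proof (cases "ds \<alpha> k \<sigma> = 0")
      case False
      then have "0 < ds \<alpha> k \<sigma>" using dist_nonneg order_le_neq_trans by metis
      then show ?thesis using assms by (intro mult_left_mono) auto
    qed simp
  qed
  finally show ?thesis by (simp add: EE_def)
qed

lemma one_step_eq:
  assumes "\<And>\<sigma>. 0 < ds \<alpha> k \<sigma> \<Longrightarrow> Bel \<alpha> f \<Psi> (na+k) \<sigma> = \<Psi> (na+k) \<sigma>"
  shows "XX \<alpha> f k + EE \<alpha> \<Psi> (Suc k) = EE \<alpha> \<Psi> k"
proof -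
  have "XX \<alpha> f k + EE \<alpha> \<Psi> (Suc k) = (\<Sum>\<sigma>\<in>UNIV. ds \<alpha> k \<sigma> * Bel \<alpha> f \<Psi> (na+k) \<sigma>)"
  proof -
    have "EE \<alpha> \<Psi> (Suc k) = (\<Sum>\<sigma>\<in>UNIV. ds \<alpha> k \<sigma> * (\<Sum>\<sigma>'\<in>UNIV. tr (na+k) \<sigma> (\<alpha> (na+k) \<sigma>) \<sigma>' * \<Psi> (Suc (na+k)) \<sigma>'))"
      unfolding EE_def by (simp only: step_exp add_Suc_right)
    then show ?thesis unfolding XX_def Bel_def EE_def
      by (simp add: sum.distrib distrib_left)
  qed
  also have "\<dots> = (\<Sum>\<sigma>\<in>UNIV. ds \<alpha> k \<sigma> * \<Psi> (na+k) \<sigma>)"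
  proof (rule sum.cong)
    fix \<sigma>
    show "ds \<alpha> k \<sigma> * Bel \<alpha> f \<Psi> (na+k) \<sigma> = ds \<alpha> k \<sigma> * \<Psi> (na+k) \<sigma>"
    proof (cases "ds \<alpha> k \<sigma> = 0")
      case False
      then have "0 < ds \<alpha> k \<sigma>" using dist_nonneg order_le_neq_trans by metis
      then show ?thesis using assms by auto
    qed simp
  qed simp
  finally show ?thesis by (simp add: EE_def)
qed

lemma tele_le:
  assumes "\<And>k \<sigma>. K0 \<le> k \<Longrightarrow> 0 < ds \<alpha> k \<sigma> \<Longrightarrow> Bel \<alpha> f \<Psi> (na+k) \<sigma> \<le> \<Psi> (na+k) \<sigma>"
  shows "(\<Sum>j<K. XX \<alpha> f (K0+j)) \<le> EE \<alpha> \<Psi> K0 - EE \<alpha> \<Psi> (K0+K)"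
proof (induction K)
  case (Suc K)
  have "XX \<alpha> f (K0+K) + EE \<alpha> \<Psi> (Suc (K0+K)) \<le> EE \<alpha> \<Psi> (K0+K)"
    by (rule one_step_le) (use assms in auto)
  then show ?case using Suc by simp
qed simp

lemma tele_eq:
  assumes "\<And>k \<sigma>. K0 \<le> k \<Longrightarrow> 0 < ds \<alpha> k \<sigma> \<Longrightarrow> Bel \<alpha> f \<Psi> (na+k) \<sigma> = \<Psi> (na+k) \<sigma>"
  shows "(\<Sum>j<K. XX \<alpha> f (K0+j)) = EE \<alpha> \<Psi> K0 - EE \<alpha> \<Psi> (K0+K)"
proof (induction K)
  case (Suc K)
  have "XX \<alpha> f (K0+K) + EE \<alpha> \<Psi> (Suc (K0+K)) = EE \<alpha> \<Psi> (K0+K)"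
    by (rule one_step_eq) (use assms in auto)
  then show ?case using Suc by simp
qed simp

lemma engine_le:
  assumes "\<And>k \<sigma>. K0 \<le> k \<Longrightarrow> 0 < ds \<alpha> k \<sigma> \<Longrightarrow> Bel \<alpha> f \<Psi> (na+k) \<sigma> \<le> \<Psi> (na+k) \<sigma>"
    and "summable (\<lambda>j. XX \<alpha> f (K0+j))" and "\<And>k. K1 \<le> k \<Longrightarrow> 0 \<le> EE \<alpha> \<Psi> k"
  shows "(\<Sum>j. XX \<alpha> f (K0+j)) \<le> EE \<alpha> \<Psi> K0"
proof (rule LIMSEQ_le_const2)
  show "(\<lambda>K. \<Sum>j<K. XX \<alpha> f (K0+j)) \<longlonglongrightarrow> (\<Sum>j. XX \<alpha> f (K0+j))"
    using assms(2) by (rule summable_LIMSEQ)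
  show "\<exists>N. \<forall>K\<ge>N. (\<Sum>j<K. XX \<alpha> f (K0+j)) \<le> EE \<alpha> \<Psi> K0"
  proof (intro exI allI impI)
    fix K assume "K1 \<le> K"
    then have "0 \<le> EE \<alpha> \<Psi> (K0+K)" using assms(3) by simp
    then show "(\<Sum>j<K. XX \<alpha> f (K0+j)) \<le> EE \<alpha> \<Psi> K0" using tele_le[OF assms(1), of K0 K] by simp
  qed
qed

lemma engine_eq:
  assumes "\<And>k \<sigma>. K0 \<le> k \<Longrightarrow> 0 < ds \<alpha> k \<sigma> \<Longrightarrow> Bel \<alpha> f \<Psi> (na+k) \<sigma> = \<Psi> (na+k) \<sigma>"
    and "(\<lambda>j. EE \<alpha> \<Psi> (K0+j)) \<longlonglongrightarrow> 0"
  shows "(\<lambda>j. XX \<alpha> f (K0+j)) sums EE \<alpha> \<Psi> K0"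
proof -
  have "(\<lambda>K. EE \<alpha> \<Psi> K0 - EE \<alpha> \<Psi> (K0+K)) \<longlonglongrightarrow> EE \<alpha> \<Psi> K0 - 0"
    by (intro tendsto_diff tendsto_const assms(2))
  then show ?thesis unfolding sums_def using tele_eq[OF assms(1)] by simp
qed

definition FF :: "prices \<Rightarrow> strategy \<Rightarrow> nat \<Rightarrow> state \<Rightarrow> real" where
  "FF p \<alpha> n \<sigma> = v * reward m q1 q2 \<gamma> n \<sigma> (\<alpha> n \<sigma>) - enn2real (pay p \<alpha> n \<sigma>)"

lemma XX_FF: "XX \<alpha> (FF p \<alpha>) k = v * rk \<alpha> k - pk p \<alpha> k"
  unfolding XX_def FF_def rk_def pk_def
  by (simp add: right_diff_distrib sum_subtractf sum_distrib_left algebra_simps)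

lemma compare:
  fixes \<alpha> \<beta> :: strategy and \<Psi> :: "nat \<Rightarrow> state \<Rightarrow> real"
  assumes M: "na \<le> M" and agree: "\<And>n \<sigma>. n < M \<Longrightarrow> \<alpha> n \<sigma> = \<beta> n \<sigma>"
    and P\<beta>: "exp_payment m p tau \<beta> \<noteq> top"
    and B\<beta>: "\<And>k \<sigma>. M - na \<le> k \<Longrightarrow> 0 < ds \<beta> k \<sigma> \<Longrightarrow> Bel \<beta> (FF p \<beta>) \<Psi> (na+k) \<sigma> \<le> \<Psi> (na+k) \<sigma>"
    and ev\<beta>: "\<And>k. K1 \<le> k \<Longrightarrow> 0 \<le> EE \<beta> \<Psi> k"
    and fin\<alpha>: "\<And>k \<sigma>. 0 < ds \<alpha> k \<sigma> \<Longrightarrow> pay p \<alpha> (na+k) \<sigma> \<noteq> top"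
    and B\<alpha>: "\<And>k \<sigma>. M - na \<le> k \<Longrightarrow> 0 < ds \<alpha> k \<sigma> \<Longrightarrow> Bel \<alpha> (FF p \<alpha>) \<Psi> (na+k) \<sigma> = \<Psi> (na+k) \<sigma>"
    and lim\<alpha>: "(\<lambda>j. EE \<alpha> \<Psi> (M - na + j)) \<longlonglongrightarrow> 0"
  shows "utility m q1 q2 p tau \<beta> \<le> utility m q1 q2 p tau \<alpha>"
proof -
  define K0 where "K0 = M - na"
  have dseq: "ds \<alpha> k = ds \<beta> k" if "k \<le> K0" for k
    by (rule dist_splice[of K0]) (use agree M that K0_def in auto)
  have Xeq: "XX \<alpha> (FF p \<alpha>) k = XX \<beta> (FF p \<beta>) k" if "k < K0" for k
    using dseq[of k] that agree[of "na+k"] unfolding XX_def FF_def K0_def by simp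
  have EEeq: "EE \<alpha> \<Psi> K0 = EE \<beta> \<Psi> K0" using dseq[of K0] by (simp add: EE_def)
  have s\<beta>: "summable (pk p \<beta>)" and u\<beta>: "utility m q1 q2 p tau \<beta> = ereal (v * suminf (rk \<beta>) - suminf (pk p \<beta>))"
    using utility_fin'[OF P\<beta>] by auto
  have sums\<alpha>: "(\<lambda>j. XX \<alpha> (FF p \<alpha>) (K0+j)) sums EE \<alpha> \<Psi> K0"
    using engine_eq[of K0 \<alpha> "FF p \<alpha>" \<Psi>] B\<alpha> lim\<alpha> by (simp add: K0_def)
  have sX\<alpha>: "summable (XX \<alpha> (FF p \<alpha>))"
  proof -
    have "summable (\<lambda>j. XX \<alpha> (FF p \<alpha>) (K0 + j))" using sums_summable[OF sums\<alpha>] .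
    then have "summable (\<lambda>j. XX \<alpha> (FF p \<alpha>) (j + K0))" by (simp add: add.commute)
    then show ?thesis using summable_iff_shift by blast
  qed
  have s\<alpha>: "summable (pk p \<alpha>)"
  proof -
    have "summable (\<lambda>k. v * rk \<alpha> k - XX \<alpha> (FF p \<alpha>) k)"
      by (intro summable_diff summable_mult summable_rk sX\<alpha>)
    then show ?thesis by (simp add: XX_FF)
  qed
  have u\<alpha>: "utility m q1 q2 p tau \<alpha> = ereal (v * suminf (rk \<alpha>) - suminf (pk p \<alpha>))"
    by (rule utility_fin[OF fin\<alpha> s\<alpha>])
  have sX\<beta>: "summable (XX \<beta> (FF p \<beta>))"
    unfolding XX_FF by (intro summable_diff summable_mult summable_rk s\<beta>)
  have tot: "v * suminf (rk \<gamma>') - suminf (pk p \<gamma>') = suminf (XX \<gamma>' (FF p \<gamma>'))"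
    if "summable (pk p \<gamma>')" for \<gamma>'
  proof -
    have a: "(\<Sum>k. v * rk \<gamma>' k) = v * suminf (rk \<gamma>')" by (rule suminf_mult[OF summable_rk])
    have b: "(\<Sum>k. v * rk \<gamma>' k) - suminf (pk p \<gamma>') = (\<Sum>k. v * rk \<gamma>' k - pk p \<gamma>' k)"
      by (rule suminf_diff[OF summable_mult[OF summable_rk] that])
    show ?thesis unfolding XX_FF using a b by simp
  qed
  have split: "suminf (XX \<gamma>' (FF p \<gamma>')) = (\<Sum>j. XX \<gamma>' (FF p \<gamma>') (K0+j)) + (\<Sum>k<K0. XX \<gamma>' (FF p \<gamma>') k)"
    if "summable (XX \<gamma>' (FF p \<gamma>'))" for \<gamma>'
    using suminf_split_initial_segment[OF that, of K0] by (simp add: add.commute)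
  have le\<beta>: "(\<Sum>j. XX \<beta> (FF p \<beta>) (K0+j)) \<le> EE \<beta> \<Psi> K0"
  proof (rule engine_le[of K0])
    show "summable (\<lambda>j. XX \<beta> (FF p \<beta>) (K0 + j))"
      proof -
      have "summable (\<lambda>j. XX \<beta> (FF p \<beta>) (j + K0))" using sX\<beta> summable_iff_shift by blast
      then show ?thesis by (simp add: add.commute)
    qed
  qed (use B\<beta> ev\<beta> K0_def in auto)
  have "v * suminf (rk \<beta>) - suminf (pk p \<beta>) \<le> v * suminf (rk \<alpha>) - suminf (pk p \<alpha>)"
    unfolding tot[OF s\<beta>] tot[OF s\<alpha>] split[OF sX\<beta>] split[OF sX\<alpha>]
    using le\<beta> EEeq sums_unique[OF sums\<alpha>] Xeq by simp
  then show ?thesis using u\<alpha> u\<beta> by simp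
qed

end

context mdl begin

lemma reach_inv:
  assumes init: "P na (True, False, False)"
    and step: "\<And>n \<sigma> \<sigma>'. rch \<alpha> n \<sigma> \<Longrightarrow> 0 < tr n \<sigma> (\<alpha> n \<sigma>) \<sigma>' \<Longrightarrow> P n \<sigma> \<Longrightarrow> P (Suc n) \<sigma>'"
  shows "rch \<alpha> n \<sigma> \<Longrightarrow> P n \<sigma>"
proof (induction n arbitrary: \<sigma>)
  case 0
  then have "na = 0" by (simp add: reach_iff)
  then show ?case using 0 init reach_init by auto
next
  case (Suc n)
  show ?case
  proof (cases "Suc n = na")
    case True
    then show ?thesis using Suc.prems init reach_init by auto
  next
    case False
    then have "na \<le> n" using Suc.prems by (simp add: reach_iff)
    then obtain \<sigma>0 where "rch \<alpha> n \<sigma>0" "0 < tr n \<sigma>0 (\<alpha> n \<sigma>0) \<sigma>"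
      using reach_step Suc.prems by blast
    then show ?thesis using Suc.IH step by blast
  qed
qed

lemma reach_inv_from:
  assumes naN: "na \<le> N" and init: "\<And>\<sigma>. rch \<alpha> N \<sigma> \<Longrightarrow> P N \<sigma>"
    and step: "\<And>n \<sigma> \<sigma>'. N \<le> n \<Longrightarrow> rch \<alpha> n \<sigma> \<Longrightarrow> 0 < tr n \<sigma> (\<alpha> n \<sigma>) \<sigma>' \<Longrightarrow> P n \<sigma> \<Longrightarrow> P (Suc n) \<sigma>'"
  shows "N \<le> n \<Longrightarrow> rch \<alpha> n \<sigma> \<Longrightarrow> P n \<sigma>"
proof (induction n arbitrary: \<sigma>)
  case 0
  then show ?case using init by simp
next
  case (Suc n)
  show ?case
  proof (cases "Suc n = N")
    case True
    then show ?thesis using Suc.prems init by auto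
  next
    case False
    then have Nn: "N \<le> n" using Suc.prems by simp
    have "na \<noteq> Suc n" using naN Nn by simp
    then have "na \<le> n" using Suc.prems by (simp add: reach_iff)
    then obtain \<sigma>0 where "rch \<alpha> n \<sigma>0" "0 < tr n \<sigma>0 (\<alpha> n \<sigma>0) \<sigma>"
      using reach_step Suc.prems by blast
    then show ?thesis using Suc.IH step Nn by blast
  qed
qed

lemma succ_ex: "\<exists>\<sigma>'. 0 < tr n \<sigma> a \<sigma>'"
proof (rule ccontr)
  assume "\<nexists>\<sigma>'. 0 < tr n \<sigma> a \<sigma>'"
  then have "\<And>\<sigma>'. tr n \<sigma> a \<sigma>' = 0" using trans_nonneg by (metis order.not_eq_order_implies_strict)
  then show False using trans_sum[of n \<sigma> a] by simp
qed

lemma path_fix: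
  assumes "rch \<alpha> n \<sigma>" "bad \<sigma>" "\<And>\<sigma>'. rch \<alpha> N \<sigma>' \<Longrightarrow> \<not> bad \<sigma>'" "n \<le> N"
    and step: "\<And>n \<sigma>. rch \<alpha> n \<sigma> \<Longrightarrow> bad \<sigma> \<Longrightarrow> \<not> fx n (\<alpha> n \<sigma>) \<Longrightarrow> \<exists>\<sigma>'. bad \<sigma>' \<and> 0 < tr n \<sigma> (\<alpha> n \<sigma>) \<sigma>'"
  shows "\<exists>n' \<sigma>'. n \<le> n' \<and> n' < N \<and> rch \<alpha> n' \<sigma>' \<and> bad \<sigma>' \<and> fx n' (\<alpha> n' \<sigma>')"
  using assms(1,2,4)
proof (induction "N - n" arbitrary: n \<sigma>)
  case 0
  then have "n = N" by simp
  then show ?case using 0 assms(3) by blast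
next
  case (Suc d)
  show ?case
  proof (cases "fx n (\<alpha> n \<sigma>)")
    case True
    have "n \<noteq> N" using Suc.prems assms(3) by blast
    then show ?thesis using True Suc.prems by (intro exI[of _ n] exI[of _ \<sigma>]) auto
  next
    case False
    then obtain \<sigma>' where s: "bad \<sigma>'" "0 < tr n \<sigma> (\<alpha> n \<sigma>) \<sigma>'" using step Suc.prems by blast
    then have r: "rch \<alpha> (Suc n) \<sigma>'" using reach_next Suc.prems by blast
    have "n \<noteq> N" using Suc.prems assms(3) by blast
    then have "d = N - Suc n" "Suc n \<le> N" using Suc.hyps Suc.prems by auto
    from Suc.hyps(1)[OF this(1) r s(1) this(2)] show ?thesis
      by (meson Suc_leD order.trans)
  qed
qed

lemma EE_le: "(\<And>\<sigma>. 0 < ds \<alpha> k \<sigma> \<Longrightarrow> \<Psi> (na+k) \<sigma> \<le> c) \<Longrightarrow> EE \<alpha> \<Psi> k \<le> c"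
proof -
  assume h: "\<And>\<sigma>. 0 < ds \<alpha> k \<sigma> \<Longrightarrow> \<Psi> (na+k) \<sigma> \<le> c"
  have "EE \<alpha> \<Psi> k \<le> (\<Sum>\<sigma>\<in>UNIV. ds \<alpha> k \<sigma> * c)"
    unfolding EE_def
  proof (rule sum_mono)
    fix \<sigma> show "ds \<alpha> k \<sigma> * \<Psi> (na + k) \<sigma> \<le> ds \<alpha> k \<sigma> * c"
      using h[of \<sigma>] dist_nonneg[of \<alpha> k \<sigma>]
      by (cases "ds \<alpha> k \<sigma> = 0") (auto intro: mult_left_mono)
  qed
  also have "\<dots> = c" by (simp add: sum_distrib_right[symmetric] dist_sum)
  finally show ?thesis .
qed

lemma EE_ge: "(\<And>\<sigma>. 0 < ds \<alpha> k \<sigma> \<Longrightarrow> c \<le> \<Psi> (na+k) \<sigma>) \<Longrightarrow> c \<le> EE \<alpha> \<Psi> k"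
proof -
  assume h: "\<And>\<sigma>. 0 < ds \<alpha> k \<sigma> \<Longrightarrow> c \<le> \<Psi> (na+k) \<sigma>"
  have "c = (\<Sum>\<sigma>\<in>UNIV. ds \<alpha> k \<sigma> * c)" by (simp add: sum_distrib_right[symmetric] dist_sum)
  also have "\<dots> \<le> EE \<alpha> \<Psi> k"
    unfolding EE_def
  proof (rule sum_mono)
    fix \<sigma> show "ds \<alpha> k \<sigma> * c \<le> ds \<alpha> k \<sigma> * \<Psi> (na + k) \<sigma>"
      using h[of \<sigma>] dist_nonneg[of \<alpha> k \<sigma>]
      by (cases "ds \<alpha> k \<sigma> = 0") (auto intro: mult_left_mono)
  qed
  finally show ?thesis .
qed

lemma pay_real:
  assumes "payment m p n (s, b1, b2) \<noteq> top" "m \<le> n"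
  shows "enn2real (payment m p n (s, b1, b2)) =
    of_bool s * enn2real (priceS p) + of_bool b1 * enn2real (fst (snd p)) + of_bool b2 * enn2real (price2 p)"
  using assms
  by (cases s; cases b1; cases b2)
     (simp_all add: payment_def price1_def subs_def buy1_def buy2_def enn2real_plus less_top[symmetric])

lemma pay_parts:
  assumes "payment m p n (s, b1, b2) \<noteq> top" "m \<le> n"
  shows "s \<Longrightarrow> priceS p \<noteq> top" "b1 \<Longrightarrow> fst (snd p) \<noteq> top" "b2 \<Longrightarrow> price2 p \<noteq> top"
  using assms by (auto simp: payment_def price1_def subs_def buy1_def buy2_def)

definition pdx :: "bool \<Rightarrow> bool \<Rightarrow> bool \<Rightarrow> bool \<Rightarrow> bool \<Rightarrow> bool \<Rightarrow> real" where
  "pdx d o1 o2 s b1 b2 = (if d \<and> (s \<or> o1 \<or> b1 \<or> o2 \<or> b2) then \<delta> else of_bool d)"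

lemma Bel_expand:
  assumes "m \<le> n" "\<beta> n (d, o1, o2) = (s, b1, b2)" "payment m p n (s, b1, b2) \<noteq> top"
  shows "Bel \<beta> (FF p \<beta>) \<Psi> n (d, o1, o2) =
    v * (of_bool d * (if s then Q1 n + Q2 n else of_bool (o1 \<or> b1) * Q1 n + of_bool (o2 \<or> b2) * Q2 n))
    - (of_bool s * enn2real (priceS p) + of_bool b1 * enn2real (fst (snd p)) + of_bool b2 * enn2real (price2 p))
    + (pdx d o1 o2 s b1 b2 * \<Psi> (Suc n) (True, o1 \<or> b1, o2 \<or> b2)
       + (1 - pdx d o1 o2 s b1 b2) * \<Psi> (Suc n) (False, o1 \<or> b1, o2 \<or> b2))"
proof -
  have sn: "Suc n \<noteq> m" using assms(1) by simp
  have pd: "pdn (d, o1, o2) (s, b1, b2) = pdx d o1 o2 s b1 b2"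
    by (auto simp: pdn_def pdx_def dem_def own_def subs_def buy1_def buy2_def)
  show ?thesis
    unfolding Bel_def FF_def exp_next[OF sn] assms(2) pay_real[OF assms(3,1)] pd
    using assms(1)
    by (simp add: reward_def qual_eq oS_def dem_def own_def subs_def buy1_def buy2_def)
qed

end

lemma finite_max_splice:
  fixes C :: "strategy set" and u :: "strategy \<Rightarrow> ereal" and \<alpha>0 :: strategy and M :: nat
  defines "sp \<equiv> \<lambda>\<beta>. (\<lambda>n. if n < M then \<beta> n else \<alpha>0 n)"
  assumes ne: "C \<noteq> {}" and cl: "\<And>\<beta>. \<beta> \<in> C \<Longrightarrow> sp \<beta> \<in> C" and le: "\<And>\<beta>. \<beta> \<in> C \<Longrightarrow> u \<beta> \<le> u (sp \<beta>)"
  shows "\<exists>\<beta>\<in>C. optimal_in C u (sp \<beta>)"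
proof -
  define S where "S = sp ` C"
  have "S \<subseteq> sp ` (PiE {..<M} (\<lambda>_. UNIV))"
  proof
    fix g assume "g \<in> S"
    then obtain \<beta> where "\<beta> \<in> C" "g = sp \<beta>" by (auto simp: S_def)
    moreover have "sp \<beta> = sp (restrict \<beta> {..<M})" by (rule ext) (simp add: sp_def)
    moreover have "restrict \<beta> {..<M} \<in> PiE {..<M} (\<lambda>_. UNIV)" by simp
    ultimately show "g \<in> sp ` (PiE {..<M} (\<lambda>_. UNIV))" by blast
  qed
  moreover have "finite (PiE {..<M} (\<lambda>_. (UNIV :: (state \<Rightarrow> action) set)))"
    by (intro finite_PiE) auto
  ultimately have fin: "finite S" using finite_subset by blast
  have neS: "S \<noteq> {}" using ne by (simp add: S_def)
  have "Max (u ` S) \<in> u ` S" using fin neS by (intro Max_in) auto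
  then obtain \<beta>0 where b0: "\<beta>0 \<in> C" "u (sp \<beta>0) = Max (u ` S)" by (auto simp: S_def)
  have "optimal_in C u (sp \<beta>0)"
    unfolding optimal_in_def
  proof (intro conjI ballI)
    show "sp \<beta>0 \<in> C" using cl b0 by blast
    fix \<beta> assume "\<beta> \<in> C"
    have "u \<beta> \<le> u (sp \<beta>)" "sp \<beta> \<in> S" using le \<open>\<beta> \<in> C\<close> by (auto simp: S_def)
    moreover have "u (sp \<beta>) \<le> Max (u ` S)" using fin \<open>sp \<beta> \<in> S\<close> by (intro Max_ge) auto
    ultimately show "u \<beta> \<le> u (sp \<beta>0)" using b0 by simp
  qed
  then show ?thesis using b0 by blast
qed

context mdl begin

definition SS :: "nat \<Rightarrow> real" where "SS n = (Q1 n + Q2 n) / (1 - \<delta> * \<gamma>)"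

lemma dg: "0 < 1 - \<delta> * \<gamma>"
proof -
  have "\<delta> * \<gamma> < 1 * 1" using d0 d1 g0 g1 by (intro mult_strict_mono) auto
  then show ?thesis by simp
qed

lemma SS_Suc: "SS (Suc n) = \<gamma> * SS n"
  by (simp add: SS_def Q1_Suc Q2_Suc algebra_simps add_divide_distrib)

lemma SS_nonneg: "0 \<le> SS n"
  using Q1_pos[of n] Q2_pos[of n] dg by (simp add: SS_def)

lemma SS_rec: "v * SS n = v * (Q1 n + Q2 n) + \<delta> * (v * SS (Suc n))"
proof -
  have "SS n * (1 - \<delta> * \<gamma>) = Q1 n + Q2 n" using dg by (simp add: SS_def)
  then have "SS n = Q1 n + Q2 n + \<delta> * (\<gamma> * SS n)" by (simp add: algebra_simps)
  then have "v * SS n = v * (Q1 n + Q2 n + \<delta> * (\<gamma> * SS n))" by (rule arg_cong)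
  then show ?thesis by (simp add: SS_Suc algebra_simps)
qed

lemma SS_le: "v * SS n \<le> v * Cq * \<gamma> ^ n / (1 - \<delta> * \<gamma>)"
  using Q_le[of n] dg v0 by (simp add: SS_def divide_right_mono mult_left_mono mult.assoc)

definition CC :: "real \<Rightarrow> real \<Rightarrow> bool \<times> bool \<Rightarrow> real" where
  "CC P1r P2r o' = of_bool (\<not> fst o') * P1r + of_bool (\<not> snd o') * P2r"

definition Psi1 :: "real \<Rightarrow> real \<Rightarrow> nat \<Rightarrow> state \<Rightarrow> real" where
  "Psi1 P1r P2r n \<sigma> = of_bool (dem \<sigma>) * (v * SS n) - CC P1r P2r (own \<sigma>)"

lemma bell1:
  fixes d o1 o2 s b1 b2 :: bool
  assumes ps: "0 \<le> PSr" "0 \<le> P1r" "0 \<le> P2r"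
  shows "v * (of_bool d * (if s then Q1 n + Q2 n else of_bool (o1 \<or> b1) * Q1 n + of_bool (o2 \<or> b2) * Q2 n))
    - (of_bool s * PSr + of_bool b1 * P1r + of_bool b2 * P2r)
    + (pdx d o1 o2 s b1 b2 * Psi1 P1r P2r (Suc n) (True, o1 \<or> b1, o2 \<or> b2)
       + (1 - pdx d o1 o2 s b1 b2) * Psi1 P1r P2r (Suc n) (False, o1 \<or> b1, o2 \<or> b2))
    \<le> Psi1 P1r P2r n (d, o1, o2)"
proof -
  define pd where "pd = pdx d o1 o2 s b1 b2"
  define rew where "rew = (if s then Q1 n + Q2 n else of_bool (o1 \<or> b1) * Q1 n + of_bool (o2 \<or> b2) * Q2 n)"
  define C' where "C' = CC P1r P2r (o1 \<or> b1, o2 \<or> b2)"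
  define C where "C = CC P1r P2r (o1, o2)"
  have e1: "pd * Psi1 P1r P2r (Suc n) (True, o1 \<or> b1, o2 \<or> b2) + (1 - pd) * Psi1 P1r P2r (Suc n) (False, o1 \<or> b1, o2 \<or> b2)
      = pd * (v * SS (Suc n)) - C'"
    by (simp add: Psi1_def C'_def dem_def own_def algebra_simps)
  have e2: "C - C' \<le> of_bool s * PSr + of_bool b1 * P1r + of_bool b2 * P2r"
    unfolding C_def C'_def CC_def using ps by (cases s; cases o1; cases b1; cases o2; cases b2) simp_all
  have rl: "0 \<le> rew" "rew \<le> Q1 n + Q2 n"
    using Q1_pos[of n] Q2_pos[of n] unfolding rew_def by (cases s; cases "o1 \<or> b1"; cases "o2 \<or> b2"; simp)+
  have key: "v * (of_bool d * rew) + pd * (v * SS (Suc n)) \<le> of_bool d * (v * SS n)"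
  proof (cases d)
    case False
    then show ?thesis by (simp add: pd_def pdx_def)
  next
    case True
    show ?thesis
    proof (cases "s \<or> o1 \<or> b1 \<or> o2 \<or> b2")
      case True
      then have "pd = \<delta>" using \<open>d\<close> by (simp add: pd_def pdx_def)
      moreover have "v * rew \<le> v * (Q1 n + Q2 n)" using rl v0 by (simp add: mult_left_mono)
      ultimately show ?thesis using SS_rec[of n] \<open>d\<close> by simp
    next
      case False
      then have "pd = 1" "rew = 0" using \<open>d\<close> by (auto simp: pd_def pdx_def rew_def)
      moreover have "v * SS (Suc n) \<le> v * SS n"
      proof -
        have "\<gamma> * SS n \<le> SS n" using SS_nonneg[of n] g1 g0 by (simp add: mult_left_le_one_le)
        then show ?thesis using v0 by (simp add: SS_Suc mult_left_mono)
      qed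
      ultimately show ?thesis using \<open>d\<close> by simp
    qed
  qed
  have "Psi1 P1r P2r n (d, o1, o2) = of_bool d * (v * SS n) - C" by (simp add: Psi1_def C_def dem_def own_def)
  then show ?thesis
    unfolding pd_def[symmetric] rew_def[symmetric] e1 using key e2 by simp
qed

lemma bell1_eq:
  fixes d o1 o2 :: bool
  shows "v * (of_bool d * (if False then Q1 n + Q2 n else of_bool (o1 \<or> \<not> o1) * Q1 n + of_bool (o2 \<or> \<not> o2) * Q2 n))
    - (of_bool False * PSr + of_bool (\<not> o1) * P1r + of_bool (\<not> o2) * P2r)
    + (pdx d o1 o2 False (\<not> o1) (\<not> o2) * Psi1 P1r P2r (Suc n) (True, o1 \<or> \<not> o1, o2 \<or> \<not> o2)
       + (1 - pdx d o1 o2 False (\<not> o1) (\<not> o2)) * Psi1 P1r P2r (Suc n) (False, o1 \<or> \<not> o1, o2 \<or> \<not> o2))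
    = Psi1 P1r P2r n (d, o1, o2)"
  using SS_rec[of n]
  by (cases d) (auto simp: pdx_def Psi1_def CC_def dem_def own_def algebra_simps)

end

context mdl begin

definition MM where "MM = max na m"
definition a1 :: strategy where "a1 n \<sigma> = (False, \<not> fst (own \<sigma>), \<not> snd (own \<sigma>))"

lemma no_upgrade_early:
  assumes "admissible m \<beta>" "rch \<beta> n \<sigma>" "n \<le> m"
  shows "\<not> snd (own \<sigma>)"
proof -
  have i: "na \<le> m \<longrightarrow> \<not> snd (own (True, False, False))" by (simp add: own_def)
  have s: "Suc n \<le> m \<longrightarrow> \<not> snd (own \<sigma>')"
    if "rch \<beta> n \<sigma>" "0 < tr n \<sigma> (\<beta> n \<sigma>) \<sigma>'" "n \<le> m \<longrightarrow> \<not> snd (own \<sigma>)" for n \<sigma> \<sigma>'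
  proof -
    have "n < m \<Longrightarrow> \<not> buy2 (\<beta> n \<sigma>)" using assms(1) unfolding admissible_def by blast
    then show ?thesis using trans_pos_own[OF that(2)] that(3) by auto
  qed
  have "n \<le> m \<longrightarrow> \<not> snd (own \<sigma>)"
  proof (rule reach_inv[where P="\<lambda>n \<sigma>. n \<le> m \<longrightarrow> \<not> snd (own \<sigma>)" and \<alpha>=\<beta>])
    show "na \<le> m \<longrightarrow> \<not> snd (own (True, False, False))" by (rule i)
    show "\<And>n \<sigma> \<sigma>'. rch \<beta> n \<sigma> \<Longrightarrow> 0 < tr n \<sigma> (\<beta> n \<sigma>) \<sigma>' \<Longrightarrow> n \<le> m \<longrightarrow> \<not> snd (own \<sigma>) \<Longrightarrow> Suc n \<le> m \<longrightarrow> \<not> snd (own \<sigma>')"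
      by (rule s)
    show "rch \<beta> n \<sigma>" by (rule assms(2))
  qed
  then show ?thesis using assms(3) by blast
qed

lemma own_persist:
  assumes "na \<le> N" "\<forall>\<sigma>. rch \<beta> N \<sigma> \<longrightarrow> own \<sigma> = (True, True)" "N \<le> n" "rch \<beta> n \<sigma>"
  shows "own \<sigma> = (True, True)"
proof -
  have s: "own \<sigma>' = (True, True)"
    if "N \<le> n" "rch \<beta> n \<sigma>" "0 < tr n \<sigma> (\<beta> n \<sigma>) \<sigma>'" "own \<sigma> = (True, True)" for n \<sigma> \<sigma>'
    using trans_pos_own[OF that(3)] that(4) by simp
  show ?thesis
  proof (rule reach_inv_from[where P="\<lambda>n \<sigma>. own \<sigma> = (True, True)" and \<alpha>=\<beta> and N=N])
    show "na \<le> N" by (rule assms(1))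
    show "\<And>\<sigma>. rch \<beta> N \<sigma> \<Longrightarrow> own \<sigma> = (True, True)" using assms(2) by blast
    show "\<And>n \<sigma> \<sigma>'. N \<le> n \<Longrightarrow> rch \<beta> n \<sigma> \<Longrightarrow> 0 < tr n \<sigma> (\<beta> n \<sigma>) \<sigma>' \<Longrightarrow> own \<sigma> = (True, True) \<Longrightarrow> own \<sigma>' = (True, True)"
      by (rule s)
  qed (use assms in auto)
qed

lemma part1:
  "\<exists>\<alpha>. optimal_in (class_upgrade m tau) (utility m q1 q2 p tau) \<alpha> \<and>
     (\<forall>\<sigma>. rch \<alpha> (max na m) \<sigma> \<longrightarrow> buy2 (\<alpha> (max na m) \<sigma>) \<and> (fst (own \<sigma>) \<or> buy1 (\<alpha> (max na m) \<sigma>))) \<and>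
     (\<forall>n\<ge>m. \<forall>\<sigma>. rch \<alpha> n \<sigma> \<longrightarrow> \<not> subs (\<alpha> n \<sigma>))"
proof -
  define sp where "sp = (\<lambda>\<beta>::strategy. (\<lambda>n. if n < MM then \<beta> n else a1 n))"
  define C where "C = class_upgrade m tau"
  define u where "u = utility m q1 q2 p tau"
  define \<Psi> where "\<Psi> = Psi1 (enn2real (fst (snd p))) (enn2real (price2 p))"
  have naM: "na \<le> MM" "m \<le> MM" by (auto simp: MM_def)
  have agree: "\<And>\<beta> n \<sigma>. n < MM \<Longrightarrow> sp \<beta> n \<sigma> = \<beta> n \<sigma>" by (simp add: sp_def)
  have post: "\<And>\<beta> n \<sigma>. MM \<le> n \<Longrightarrow> sp \<beta> n \<sigma> = a1 n \<sigma>" by (simp add: sp_def)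
  have dseq: "ds (sp \<beta>) k = ds \<beta> k" if "k \<le> MM - na" for \<beta> k
    by (rule dist_splice[of "MM - na"]) (use naM that in \<open>auto simp: sp_def\<close>)
  have rch_eq: "rch (sp \<beta>) MM \<sigma> \<longleftrightarrow> rch \<beta> MM \<sigma>" for \<beta> \<sigma>
    using dseq[of "MM - na" \<beta>] naM by (simp add: reach_iff)
  have own_after: "own \<sigma> = (True, True)" if h1: "MM < n" and h2: "rch (sp \<beta>) n \<sigma>" for \<beta> n \<sigma>
  proof -
    define n' where "n' = n - 1"
    have n: "n = Suc n'" "MM \<le> n'" using h1 by (auto simp: n'_def)
    then have "na \<le> n'" using naM by simp
    then obtain \<sigma>0 where "rch (sp \<beta>) n' \<sigma>0" "0 < tr n' \<sigma>0 (sp \<beta> n' \<sigma>0) \<sigma>"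
      using reach_step h2 n by blast
    then show ?thesis using trans_pos_own post[OF n(2)] by (simp add: a1_def buy1_def buy2_def)
  qed
  have adm_cl: "sp \<beta> \<in> C" if adm: "admissible m \<beta>" for \<beta>
  proof -
    have "admissible m (sp \<beta>)" using adm naM by (auto simp: admissible_def sp_def)
    moreover have "\<forall>\<sigma>. rch (sp \<beta>) (Suc MM) \<sigma> \<longrightarrow> own \<sigma> = (True, True)"
      using own_after[of "Suc MM"] by blast
    ultimately show "sp \<beta> \<in> C" unfolding C_def class_upgrade_def using naM
      by (auto intro!: exI[of _ "Suc MM"])
  qed
  have ne: "C \<noteq> {}" using adm_cl[of "\<lambda>_ _. (False, False, False)"] by (auto simp: admissible_def buy2_def)
  have cl: "sp \<beta> \<in> C" if "\<beta> \<in> C" for \<beta>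
    using that adm_cl by (auto simp: C_def class_upgrade_def)
  have le: "u \<beta> \<le> u (sp \<beta>)" if "\<beta> \<in> C" for \<beta>
  proof -
    from that have adm: "admissible m \<beta>" and "\<exists>N\<ge>na. \<forall>\<sigma>. rch \<beta> N \<sigma> \<longrightarrow> own \<sigma> = (True, True)"
      by (auto simp: C_def class_upgrade_def)
    then obtain N0 where N0: "na \<le> N0" "\<forall>\<sigma>. rch \<beta> N0 \<sigma> \<longrightarrow> own \<sigma> = (True, True)" by blast
    define N where "N = max N0 MM"
    have ownN: "own \<sigma> = (True, True)" if "N \<le> n" "rch \<beta> n \<sigma>" for n \<sigma>
      using own_persist[OF N0(1) N0(2), of n \<sigma>] that by (simp add: N_def)
    show "u \<beta> \<le> u (sp \<beta>)"
    proof (cases "exp_payment m p tau \<beta> = top")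
      case True then show ?thesis by (simp add: u_def utility_inf)
    next
      case False
      have fin\<beta>: "pay p \<beta> (na+k) \<sigma> \<noteq> top" if "0 < ds \<beta> k \<sigma>" for k \<sigma>
        using pay_fin_reach False that by blast
      have fin\<beta>': "payment m p n (\<beta> n \<sigma>) \<noteq> top" if "rch \<beta> n \<sigma>" for n \<sigma>
        using fin\<beta>[of "n - na" \<sigma>] that by (simp add: reach_iff)
      have pfin: "fst (snd p) \<noteq> top" if r: "rch \<beta> MM \<sigma>" "\<not> fst (own \<sigma>)" for \<sigma>
      proof -
        have "\<exists>n' \<sigma>'. MM \<le> n' \<and> n' < N \<and> rch \<beta> n' \<sigma>' \<and> \<not> fst (own \<sigma>') \<and> buy1 (\<beta> n' \<sigma>')"
        proof (rule path_fix[where bad="\<lambda>\<sigma>. \<not> fst (own \<sigma>)" and fx="\<lambda>n a. buy1 a"])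
          show "\<not> \<not> fst (own \<sigma>')" if "rch \<beta> N \<sigma>'" for \<sigma>'
          proof -
            have "own \<sigma>' = (True, True)" by (rule ownN[OF order_refl that])
            then show ?thesis by simp
          qed
          show "MM \<le> N" by (simp add: N_def)
          fix n \<sigma> assume h: "rch \<beta> n \<sigma>" "\<not> fst (own \<sigma>)" "\<not> buy1 (\<beta> n \<sigma>)"
          obtain \<sigma>2 where t: "0 < tr n \<sigma> (\<beta> n \<sigma>) \<sigma>2" using succ_ex by blast
          have "own \<sigma>2 = (fst (own \<sigma>) \<or> buy1 (\<beta> n \<sigma>), snd (own \<sigma>) \<or> buy2 (\<beta> n \<sigma>))"
            by (rule trans_pos_own[OF t])
          then show "\<exists>\<sigma>'. \<not> fst (own \<sigma>') \<and> 0 < tr n \<sigma> (\<beta> n \<sigma>) \<sigma>'"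
            using h t by (intro exI[of _ \<sigma>2]) simp
        qed (use r in auto)
        then obtain n' \<sigma>' where n': "MM \<le> n'" "rch \<beta> n' \<sigma>'" "buy1 (\<beta> n' \<sigma>')" by blast
        obtain s b1 b2 where a: "\<beta> n' \<sigma>' = (s, b1, b2)" by (cases "\<beta> n' \<sigma>'")
        have "payment m p n' (s, b1, b2) \<noteq> top" "m \<le> n'" "b1"
          using fin\<beta>'[OF n'(2)] a n' naM by (auto simp: buy1_def)
        then show ?thesis using pay_parts by blast
      qed
      have pfin2: "price2 p \<noteq> top" if r: "rch \<beta> MM \<sigma>" "\<not> snd (own \<sigma>)" for \<sigma>
      proof -
        have "\<exists>n' \<sigma>'. MM \<le> n' \<and> n' < N \<and> rch \<beta> n' \<sigma>' \<and> \<not> snd (own \<sigma>') \<and> buy2 (\<beta> n' \<sigma>')"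
        proof (rule path_fix[where bad="\<lambda>\<sigma>. \<not> snd (own \<sigma>)" and fx="\<lambda>n a. buy2 a"])
          show "\<not> \<not> snd (own \<sigma>')" if "rch \<beta> N \<sigma>'" for \<sigma>'
          proof -
            have "own \<sigma>' = (True, True)" by (rule ownN[OF order_refl that])
            then show ?thesis by simp
          qed
          show "MM \<le> N" by (simp add: N_def)
          fix n \<sigma> assume h: "rch \<beta> n \<sigma>" "\<not> snd (own \<sigma>)" "\<not> buy2 (\<beta> n \<sigma>)"
          obtain \<sigma>2 where t: "0 < tr n \<sigma> (\<beta> n \<sigma>) \<sigma>2" using succ_ex by blast
          have "own \<sigma>2 = (fst (own \<sigma>) \<or> buy1 (\<beta> n \<sigma>), snd (own \<sigma>) \<or> buy2 (\<beta> n \<sigma>))"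
            by (rule trans_pos_own[OF t])
          then show "\<exists>\<sigma>'. \<not> snd (own \<sigma>') \<and> 0 < tr n \<sigma> (\<beta> n \<sigma>) \<sigma>'"
            using h t by (intro exI[of _ \<sigma>2]) simp
        qed (use r in auto)
        then obtain n' \<sigma>' where n': "MM \<le> n'" "rch \<beta> n' \<sigma>'" "buy2 (\<beta> n' \<sigma>')" by blast
        obtain s b1 b2 where a: "\<beta> n' \<sigma>' = (s, b1, b2)" by (cases "\<beta> n' \<sigma>'")
        have "payment m p n' (s, b1, b2) \<noteq> top" "m \<le> n'" "b2"
          using fin\<beta>'[OF n'(2)] a n' naM by (auto simp: buy2_def)
        then show ?thesis using pay_parts by blast
      qed
      have fin\<alpha>: "pay p (sp \<beta>) (na+k) \<sigma> \<noteq> top" if pos: "0 < ds (sp \<beta>) k \<sigma>" for k \<sigma>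
      proof -
        consider "na + k < MM" | "na + k = MM" | "MM < na + k" by linarith
        then show ?thesis
        proof cases
          case 1
          then have "k \<le> MM - na" by simp
          then show ?thesis using pos dseq fin\<beta> agree[OF 1] by simp
        next
          case 2
          then have k: "k = MM - na" by simp
          then have "rch (sp \<beta>) MM \<sigma>" using pos naM by (simp add: reach_iff)
          then have r: "rch \<beta> MM \<sigma>" using rch_eq by blast
          show ?thesis using 2 post[of MM] naM pfin[OF r] pfin2[OF r]
            by (auto simp: a1_def payment_def price1_def subs_def buy1_def buy2_def)
        next
          case 3
          then have "own \<sigma> = (True, True)" using own_after[OF 3] pos by (simp add: reach_iff)
          then show ?thesis using 3 post[of "na+k"]
            by (simp add: a1_def payment_def subs_def buy1_def buy2_def)
        qed
      qed
      have B\<beta>: "Bel \<beta> (FF p \<beta>) \<Psi> (na+k) \<sigma> \<le> \<Psi> (na+k) \<sigma>" if "MM - na \<le> k" "0 < ds \<beta> k \<sigma>" for k \<sigma>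
      proof -
        obtain d o1 o2 where \<sigma>: "\<sigma> = (d, o1, o2)" by (cases \<sigma>)
        obtain s b1 b2 where a: "\<beta> (na+k) (d, o1, o2) = (s, b1, b2)" by (cases "\<beta> (na+k) (d, o1, o2)")
        have mk: "m \<le> na + k" using that naM by linarith
        have pf: "payment m p (na+k) (s, b1, b2) \<noteq> top" using fin\<beta>[OF that(2)] a \<sigma> by simp
        show ?thesis unfolding \<sigma> Bel_expand[where \<beta>=\<beta> and \<Psi>=\<Psi>, OF mk a pf] unfolding \<Psi>_def
          by (rule bell1) (simp_all add: enn2real_nonneg)
      qed
      have ev\<beta>: "0 \<le> EE \<beta> \<Psi> k" if "N - na \<le> k" for k
      proof (rule EE_ge)
        fix \<sigma> assume "0 < ds \<beta> k \<sigma>"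
        then have "rch \<beta> (na+k) \<sigma>" by (simp add: reach_iff)
        moreover have "N \<le> na + k" using that N0(1) naM unfolding N_def by linarith
        ultimately have "own \<sigma> = (True, True)" using ownN by blast
        then show "0 \<le> \<Psi> (na+k) \<sigma>" using SS_nonneg v0 by (simp add: \<Psi>_def Psi1_def CC_def)
      qed
      have B\<alpha>: "Bel (sp \<beta>) (FF p (sp \<beta>)) \<Psi> (na+k) \<sigma> = \<Psi> (na+k) \<sigma>" if "MM - na \<le> k" "0 < ds (sp \<beta>) k \<sigma>" for k \<sigma>
      proof -
        obtain d o1 o2 where \<sigma>: "\<sigma> = (d, o1, o2)" by (cases \<sigma>)
        have mk: "m \<le> na + k" "MM \<le> na + k" using that naM by linarith+
        have a: "sp \<beta> (na+k) (d, o1, o2) = (False, \<not> o1, \<not> o2)"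
          using post[OF mk(2)] by (simp add: a1_def own_def)
        have pf: "payment m p (na+k) (False, \<not> o1, \<not> o2) \<noteq> top" using fin\<alpha>[OF that(2)] a \<sigma> by simp
        show ?thesis unfolding \<sigma> Bel_expand[where \<beta>="sp \<beta>" and \<Psi>=\<Psi>, OF mk(1) a pf] unfolding \<Psi>_def
          by (rule bell1_eq)
      qed
      have lim\<alpha>: "(\<lambda>j. EE (sp \<beta>) \<Psi> (MM - na + j)) \<longlonglongrightarrow> 0"
      proof (rule tendsto_sandwich[where f="\<lambda>_. 0" and h="\<lambda>j. (v * Cq * \<gamma> ^ MM / (1 - \<delta> * \<gamma>)) * \<gamma> ^ j"])
        have bnd: "0 \<le> EE (sp \<beta>) \<Psi> (MM - na + j) \<and> EE (sp \<beta>) \<Psi> (MM - na + j) \<le> (v * Cq * \<gamma> ^ MM / (1 - \<delta> * \<gamma>)) * \<gamma> ^ j"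
          if "1 \<le> j" for j
        proof -
          have own: "own \<sigma> = (True, True)" and "dem \<sigma> \<or> \<not> dem \<sigma>" if "0 < ds (sp \<beta>) (MM - na + j) \<sigma>" for \<sigma>
            using own_after[of "na + (MM - na + j)" \<beta> \<sigma>] that \<open>1 \<le> j\<close> naM by (auto simp: reach_iff)
          have e: "na + (MM - na + j) = MM + j" using naM by simp
          have h: "v * SS (MM + j) \<le> (v * Cq * \<gamma> ^ MM / (1 - \<delta> * \<gamma>)) * \<gamma> ^ j"
            using SS_le[of "MM + j"] by (simp add: power_add algebra_simps)
          show ?thesis
          proof
            show "0 \<le> EE (sp \<beta>) \<Psi> (MM - na + j)"
              by (rule EE_ge) (use own SS_nonneg v0 in \<open>simp add: \<Psi>_def Psi1_def CC_def\<close>)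
            show "EE (sp \<beta>) \<Psi> (MM - na + j) \<le> (v * Cq * \<gamma> ^ MM / (1 - \<delta> * \<gamma>)) * \<gamma> ^ j"
            proof (rule EE_le)
              fix \<sigma> assume "0 < ds (sp \<beta>) (MM - na + j) \<sigma>"
              then have "\<Psi> (na + (MM - na + j)) \<sigma> \<le> v * SS (MM + j)"
                using own SS_nonneg[of "MM + j"] v0 e by (simp add: \<Psi>_def Psi1_def CC_def)
              then show "\<Psi> (na + (MM - na + j)) \<sigma> \<le> (v * Cq * \<gamma> ^ MM / (1 - \<delta> * \<gamma>)) * \<gamma> ^ j"
                using h by linarith
            qed
          qed
        qed
        show "\<forall>\<^sub>F j in sequentially. 0 \<le> EE (sp \<beta>) \<Psi> (MM - na + j)"
          using bnd by (intro eventually_sequentiallyI[of 1]) auto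
        show "\<forall>\<^sub>F j in sequentially. EE (sp \<beta>) \<Psi> (MM - na + j) \<le> (v * Cq * \<gamma> ^ MM / (1 - \<delta> * \<gamma>)) * \<gamma> ^ j"
          using bnd by (intro eventually_sequentiallyI[of 1]) auto
        show "(\<lambda>_. 0) \<longlonglongrightarrow> (0::real)" by simp
        show "(\<lambda>j. (v * Cq * \<gamma> ^ MM / (1 - \<delta> * \<gamma>)) * \<gamma> ^ j) \<longlonglongrightarrow> 0"
          using g0 g1 by (intro tendsto_mult_right_zero LIMSEQ_power_zero) auto
      qed
      show ?thesis unfolding u_def
        by (rule compare[OF naM(1) agree False B\<beta> ev\<beta> fin\<alpha> B\<alpha> lim\<alpha>])
    qed
  qed
  have "\<exists>\<beta>\<in>C. optimal_in C u (sp \<beta>)"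
    using finite_max_splice[where C=C and u=u and ?\<alpha>0.0=a1 and M=MM] ne cl le unfolding sp_def by blast
  then obtain \<beta>0 where b0: "\<beta>0 \<in> C" "optimal_in C u (sp \<beta>0)" by blast
  have adm0: "admissible m \<beta>0" using b0 by (simp add: C_def class_upgrade_def)
  have shape1: "buy2 (sp \<beta>0 (max na m) \<sigma>) \<and> (fst (own \<sigma>) \<or> buy1 (sp \<beta>0 (max na m) \<sigma>))"
    if "rch (sp \<beta>0) (max na m) \<sigma>" for \<sigma>
  proof -
    have r: "rch \<beta>0 MM \<sigma>" using that rch_eq by (simp add: MM_def)
    have "\<not> snd (own \<sigma>)"
    proof (cases "na \<le> m")
      case True
      then have "MM = m" by (simp add: MM_def)
      then show ?thesis using no_upgrade_early[OF adm0 r] by simp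
    next
      case False
      then have "MM = na" by (simp add: MM_def)
      then show ?thesis using r reach_init by (simp add: own_def)
    qed
    then show ?thesis using post[of MM] by (simp add: MM_def a1_def buy1_def buy2_def)
  qed
  have shape2: "\<not> subs (sp \<beta>0 n \<sigma>)" if "m \<le> n" "rch (sp \<beta>0) n \<sigma>" for n \<sigma>
  proof -
    have "MM \<le> n" using that by (simp add: MM_def reach_iff)
    then show ?thesis using post by (simp add: a1_def subs_def)
  qed
  show ?thesis using b0 shape1 shape2 unfolding C_def u_def by blast
qed

end

lemma antimono_from:
  fixes a :: "nat \<Rightarrow> real"
  assumes "\<And>k. m \<le> k \<Longrightarrow> a (Suc k) \<le> a k" "m \<le> n" "n \<le> k"
  shows "a k \<le> a n"
  using assms(3)
proof (induction k)
  case 0 then show ?case by simp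
next
  case (Suc k)
  show ?case
  proof (cases "n = Suc k")
    case False
    then have "n \<le> k" using Suc.prems by simp
    then show ?thesis using Suc.IH assms(1)[of k] assms(2) by simp
  qed simp
qed

lemma threshold_char:
  fixes a :: "nat \<Rightarrow> real" and P :: "nat \<Rightarrow> bool"
  assumes P: "\<And>n. P n \<longleftrightarrow> m \<le> n \<and> a n < 0" and mono: "\<And>k. m \<le> k \<Longrightarrow> a (Suc k) \<le> a k"
    and k: "m \<le> k"
  shows "enat k < (if \<exists>n. P n then enat (LEAST n. P n) else \<infinity>) \<longleftrightarrow> 0 \<le> a k"
proof (cases "\<exists>n. P n")
  case True
  have L: "P (LEAST n. P n)" using True by (rule LeastI_ex)
  show ?thesis
  proof
    assume "enat k < (if \<exists>n. P n then enat (LEAST n. P n) else \<infinity>)"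
    then have "k < (LEAST n. P n)" using True by simp
    then have "\<not> P k" using not_less_Least by blast
    then show "0 \<le> a k" using P k by auto
  next
    assume a: "0 \<le> a k"
    have "\<not> (LEAST n. P n) \<le> k"
    proof
      assume le: "(LEAST n. P n) \<le> k"
      have h: "m \<le> (LEAST n. P n)" "a (LEAST n. P n) < 0" using L P by auto
      have "a k \<le> a (LEAST n. P n)" using antimono_from[where a=a, OF mono h(1) le] .
      then show False using a h(2) by simp
    qed
    then show "enat k < (if \<exists>n. P n then enat (LEAST n. P n) else \<infinity>)" using True by simp
  qed
next
  case False
  then have "\<not> P k" by blast
  then show ?thesis using P k False by auto
qed

context mdl begin

definition DD :: "(nat \<Rightarrow> real) \<Rightarrow> enat \<Rightarrow> nat \<Rightarrow> real" where
  "DD c T n = (\<Sum>j. \<delta> ^ j * (if enat (n + j) < T then c (n + j) else 0))"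

lemma geo_sum: "(\<lambda>j. \<delta> ^ j * K) sums (K / (1 - \<delta>))"
proof -
  have "(\<lambda>j. \<delta> ^ j) sums (1 / (1 - \<delta>))" using d0 d1 geometric_sums[of \<delta>] by simp
  then have "(\<lambda>j. \<delta> ^ j * K) sums (1 / (1 - \<delta>) * K)" by (rule sums_mult2)
  then show ?thesis by simp
qed


end

locale thr = mdl +
  fixes c :: "nat \<Rightarrow> real" and T :: enat
  assumes c_nonneg: "\<And>k. m \<le> k \<Longrightarrow> enat k < T \<Longrightarrow> 0 \<le> c k"
    and c_mono: "\<And>k. m \<le> k \<Longrightarrow> c (Suc k) \<le> c k"
begin

abbreviation D where "D \<equiv> DD c T"

lemma c_le: "m \<le> n \<Longrightarrow> n \<le> k \<Longrightarrow> c k \<le> c n"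
  by (rule antimono_from[where a=c, OF c_mono])

lemma term_nonneg: "m \<le> n \<Longrightarrow> 0 \<le> \<delta> ^ j * (if enat (n + j) < T then c (n + j) else 0)"
  using c_nonneg[of "n+j"] d0 by auto

lemma term_le: "m \<le> n \<Longrightarrow> \<delta> ^ j * (if enat (n + j) < T then c (n + j) else 0) \<le> \<delta> ^ j * max 0 (c n)"
  using c_le[of n "n+j"] d0 by (auto intro!: mult_left_mono)

lemma D_summable: "m \<le> n \<Longrightarrow> summable (\<lambda>j. \<delta> ^ j * (if enat (n + j) < T then c (n + j) else 0))"
  by (rule summable_comparison_test'[OF sums_summable[OF geo_sum[of "max 0 (c n)"]]])
     (use term_nonneg term_le in auto)

lemma D_nonneg: "m \<le> n \<Longrightarrow> 0 \<le> D n"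
  unfolding DD_def by (intro suminf_nonneg D_summable term_nonneg)

lemma D_le: "m \<le> n \<Longrightarrow> D n \<le> max 0 (c n) / (1 - \<delta>)"
  unfolding DD_def
  by (rule sums_le[OF _ summable_sums[OF D_summable] geo_sum]) (use term_le in auto)

lemma D_zero: "T \<le> enat n \<Longrightarrow> D n = 0"
proof -
  assume "T \<le> enat n"
  then have "\<And>j. \<not> enat (n + j) < T" by (metis enat_ord_simps(1) le_add1 not_le order.trans)
  then show ?thesis by (simp add: DD_def)
qed

lemma D_rec: "m \<le> n \<Longrightarrow> D n = (if enat n < T then c n else 0) + \<delta> * D (Suc n)"
proof -
  assume mn: "m \<le> n"
  let ?f = "\<lambda>j. \<delta> ^ j * (if enat (n + j) < T then c (n + j) else 0)"
  have s: "summable ?f" using D_summable[OF mn] .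
  have s2: "summable (\<lambda>j. \<delta> ^ j * (if enat (Suc n + j) < T then c (Suc n + j) else 0))"
    using D_summable[of "Suc n"] mn by simp
  have "(\<Sum>j. ?f (Suc j)) = suminf ?f - ?f 0" by (rule suminf_split_head[OF s])
  moreover have "(\<Sum>j. ?f (Suc j)) = \<delta> * D (Suc n)"
  proof -
    have e: "(\<lambda>j. ?f (Suc j)) = (\<lambda>j. \<delta> * (\<delta> ^ j * (if enat (Suc n + j) < T then c (Suc n + j) else 0)))"
      by (rule ext) simp
    show ?thesis unfolding e DD_def by (rule suminf_mult[OF s2])
  qed
  ultimately have "suminf ?f = ?f 0 + \<delta> * D (Suc n)" by linarith
  then show ?thesis by (simp add: DD_def)
qed

lemma D_P4: "m \<le> n \<Longrightarrow> enat n < T \<Longrightarrow> (1 - \<delta>) * D (Suc n) \<le> c n"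
proof -
  assume a: "m \<le> n" "enat n < T"
  have "D (Suc n) \<le> max 0 (c (Suc n)) / (1 - \<delta>)" using D_le a by simp
  moreover have "max 0 (c (Suc n)) \<le> c n" using c_nonneg[OF a] c_mono[OF a(1)] by simp
  ultimately have "D (Suc n) \<le> c n / (1 - \<delta>)" using d1 by (smt (verit) divide_right_mono)
  then show ?thesis using d1 by (simp add: field_simps)
qed

lemma D_dec: "m \<le> n \<Longrightarrow> D (Suc n) \<le> D n"
proof (cases "enat n < T")
  case True
  assume mn: "m \<le> n"
  have "(1 - \<delta>) * D (Suc n) \<le> c n" by (rule D_P4[OF mn True])
  then show ?thesis using D_rec[OF mn] True by (simp add: algebra_simps)
next
  case False
  assume mn: "m \<le> n"
  then have "T \<le> enat n" "T \<le> enat (Suc n)" using False by (auto simp: not_less intro: order.trans)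
  then show ?thesis using D_zero by simp
qed

lemma DD_mono':
  assumes h: "\<And>k. m \<le> k \<Longrightarrow> enat k < T \<Longrightarrow> 0 \<le> c' k \<and> c' k \<le> c k" and mn: "m \<le> n"
  shows "DD c' T n \<le> D n"
proof -
  have le: "\<delta> ^ j * (if enat (n + j) < T then c' (n + j) else 0) \<le> \<delta> ^ j * (if enat (n + j) < T then c (n + j) else 0)" for j
    using h[of "n+j"] mn d0 by (auto intro!: mult_left_mono)
  have nn: "0 \<le> \<delta> ^ j * (if enat (n + j) < T then c' (n + j) else 0)" for j
    using h[of "n+j"] mn d0 by auto
  have s': "summable (\<lambda>j. \<delta> ^ j * (if enat (n + j) < T then c' (n + j) else 0))"
    by (rule summable_comparison_test'[OF D_summable[OF mn]]) (use le nn in auto)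
  show ?thesis unfolding DD_def by (rule suminf_le[OF le s' D_summable[OF mn]])
qed

end

lemma ennreal_crit:
  fixes v q :: real and X :: ennreal
  assumes "0 \<le> v" "0 \<le> q"
  shows "ennreal v < X / ennreal q \<longleftrightarrow> (X = top \<or> v * q < enn2real X)"
proof (cases "X = top")
  case True
  have "X / ennreal q = top" using True by (simp add: ennreal_divide_eq_top_iff)
  then show ?thesis using True by simp
next
  case False
  then obtain x where x: "X = ennreal x" "0 \<le> x" by (cases X) auto
  show ?thesis
  proof (cases "q = 0")
    case True
    show ?thesis
    proof (cases "x = 0")
      case True
      then show ?thesis using \<open>q = 0\<close> x by simp
    next
      case False
      then have "X / ennreal q = top" using \<open>q = 0\<close> x by (simp add: ennreal_divide_eq_top_iff)
      then show ?thesis using \<open>q = 0\<close> x False by simp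
    qed
  next
    case False
    then have q: "0 < q" using assms by simp
    have "X / ennreal q = ennreal (x / q)" using x q by (simp add: divide_ennreal)
    moreover have "0 \<le> x / q" using x q by simp
    ultimately have "ennreal v < X / ennreal q \<longleftrightarrow> v < x / q" using assms by (simp add: ennreal_less_iff)
    also have "\<dots> \<longleftrightarrow> v * q < x" using q by (simp add: field_simps)
    finally show ?thesis using x \<open>X \<noteq> top\<close> by simp
  qed
qed


context mdl begin

lemma qual_Suc: "qual m q1 q2 \<gamma> o' (Suc n) = \<gamma> * qual m q1 q2 \<gamma> o' n"
  by (cases o') (simp add: qual_eq Q1_Suc Q2_Suc algebra_simps)

lemma qual_le': "qual m q1 q2 \<gamma> o' n \<le> Q1 n + Q2 n"
  using Q1_pos[of n] Q2_pos[of n] by (cases o') (auto simp: qual_eq)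

lemma qual_split: "Q1 n + Q2 n = qual m q1 q2 \<gamma> o' n + qual m q1 q2 \<gamma> (compl_own o') n"
  by (cases o') (simp add: qual_eq compl_own_def)

definition WW :: "bool \<times> bool \<Rightarrow> nat \<Rightarrow> real" where
  "WW o' n = qual m q1 q2 \<gamma> o' n / (1 - \<delta> * \<gamma>)"

lemma WW_rec: "v * WW o' n = v * qual m q1 q2 \<gamma> o' n + \<delta> * (v * WW o' (Suc n))"
proof -
  have "WW o' n * (1 - \<delta> * \<gamma>) = qual m q1 q2 \<gamma> o' n" using dg by (simp add: WW_def)
  then have "WW o' n = qual m q1 q2 \<gamma> o' n + \<delta> * (\<gamma> * WW o' n)" by (simp add: algebra_simps)
  then have "v * WW o' n = v * (qual m q1 q2 \<gamma> o' n + \<delta> * (\<gamma> * WW o' n))" by (rule arg_cong)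
  moreover have "WW o' (Suc n) = \<gamma> * WW o' n" by (simp add: WW_def qual_Suc)
  ultimately show ?thesis by (simp add: algebra_simps)
qed

lemma WW_nonneg: "0 \<le> WW o' n" using qual_nonneg dg by (simp add: WW_def)

lemma WW_le: "v * WW o' n \<le> v * Cq * \<gamma> ^ n / (1 - \<delta> * \<gamma>)"
proof -
  have "qual m q1 q2 \<gamma> o' n \<le> Cq * \<gamma> ^ n" by (rule qual_le)
  then have "WW o' n \<le> Cq * \<gamma> ^ n / (1 - \<delta> * \<gamma>)" using dg by (simp add: WW_def divide_right_mono)
  then have "v * WW o' n \<le> v * (Cq * \<gamma> ^ n / (1 - \<delta> * \<gamma>))" using v0 by (rule mult_left_mono)
  then show ?thesis by (simp add: mult.assoc)
qed

lemma WW_zero: "WW (False, False) n = 0" by (simp add: WW_def qual_eq)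

definition a2 :: "prices \<Rightarrow> bool \<times> bool \<Rightarrow> nat \<Rightarrow> real" where
  "a2 p o' k = (if priceS p = top then -1 else v * qual m q1 q2 \<gamma> (compl_own o') k - enn2real (priceS p))"

lemma a2_mono: "a2 p o' (Suc k) \<le> a2 p o' k"
proof -
  have "qual m q1 q2 \<gamma> (compl_own o') (Suc k) \<le> qual m q1 q2 \<gamma> (compl_own o') k"
    using qual_nonneg[of "compl_own o'" k] g1 by (simp add: qual_Suc mult_left_le_one_le g0 less_imp_le)
  then show ?thesis using v0 by (simp add: a2_def mult_left_mono)
qed

lemma a2_le: "max 0 (a2 p o' k) \<le> v * Cq * \<gamma> ^ k"
proof -
  have "0 \<le> v * Cq * \<gamma> ^ k" using v0 qual_nonneg qual_le order.trans mult_nonneg_nonneg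
    by (metis mult.assoc)
  moreover have "a2 p o' k \<le> v * Cq * \<gamma> ^ k"
    using qual_le[of "compl_own o'" k] v0 calculation
    by (auto simp: a2_def mult.assoc intro: order.trans[OF _ mult_left_mono] enn2real_nonneg
             simp del: enn2real_nonneg) (smt (verit) enn2real_nonneg mult_left_mono)
  ultimately show ?thesis by simp
qed

lemma n2_char: "m \<le> k \<Longrightarrow> enat k < n2 m q1 q2 p tau o' \<longleftrightarrow> 0 \<le> a2 p o' k"
  unfolding n2_def Let_def
proof (rule threshold_char[where a="a2 p o'"])
  fix n
  show "(m \<le> n \<and> ennreal (val tau) < priceS p / ennreal (qual m q1 q2 (dec tau) (compl_own o') n)) \<longleftrightarrow>
        m \<le> n \<and> a2 p o' n < 0"
    using ennreal_crit[OF v0 qual_nonneg[of "compl_own o'" n], of "priceS p"]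
    by (auto simp: a2_def)
qed (auto simp: a2_mono)

lemma thr2: "thr m q1 q2 \<delta> \<gamma> v (a2 p o') (n2 m q1 q2 p tau o')"
  by unfold_locales (auto simp: n2_char a2_mono)

definition Psi2 :: "prices \<Rightarrow> bool \<times> bool \<Rightarrow> nat \<Rightarrow> state \<Rightarrow> real" where
  "Psi2 p o' n \<sigma> = of_bool (dem \<sigma>) * (v * WW o' n + DD (a2 p o') (n2 m q1 q2 p tau o') n)"

lemma bell2:
  fixes d o1 o2 s :: bool
  assumes mn: "m \<le> n" and hs: "s \<Longrightarrow> priceS p \<noteq> top"
  defines "\<Psi> \<equiv> Psi2 p (o1, o2)"
  shows "v * (of_bool d * (if s then Q1 n + Q2 n else of_bool (o1 \<or> False) * Q1 n + of_bool (o2 \<or> False) * Q2 n))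
    - (of_bool s * enn2real (priceS p) + of_bool False * P1r + of_bool False * P2r)
    + (pdx d o1 o2 s False False * \<Psi> (Suc n) (True, o1 \<or> False, o2 \<or> False)
       + (1 - pdx d o1 o2 s False False) * \<Psi> (Suc n) (False, o1 \<or> False, o2 \<or> False))
    \<le> \<Psi> n (d, o1, o2)"
   and "s = (d \<and> enat n < n2 m q1 q2 p tau (o1, o2)) \<Longrightarrow>
    v * (of_bool d * (if s then Q1 n + Q2 n else of_bool (o1 \<or> False) * Q1 n + of_bool (o2 \<or> False) * Q2 n))
    - (of_bool s * enn2real (priceS p) + of_bool False * P1r + of_bool False * P2r)
    + (pdx d o1 o2 s False False * \<Psi> (Suc n) (True, o1 \<or> False, o2 \<or> False)
       + (1 - pdx d o1 o2 s False False) * \<Psi> (Suc n) (False, o1 \<or> False, o2 \<or> False))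
    = \<Psi> n (d, o1, o2)"
proof -
  interpret thr m q1 q2 \<delta> \<gamma> v na "a2 p (o1, o2)" "n2 m q1 q2 p tau (o1, o2)" by (rule thr2)
  define T where "T = n2 m q1 q2 p tau (o1, o2)"
  define a where "a = a2 p (o1, o2)"
  define qo where "qo = qual m q1 q2 \<gamma> (o1, o2) n"
  define qc where "qc = qual m q1 q2 \<gamma> (compl_own (o1, o2)) n"
  define PS where "PS = enn2real (priceS p)"
  have PS0: "0 \<le> PS" by (simp add: PS_def)
  have ch: "enat n < T \<longleftrightarrow> 0 \<le> a n" unfolding T_def a_def by (rule n2_char[OF mn])
  have Drec: "D n = (if enat n < T then a n else 0) + \<delta> * D (Suc n)" unfolding T_def a_def by (rule D_rec[OF mn])
  have Wr: "v * WW (o1, o2) n = v * qo + \<delta> * (v * WW (o1, o2) (Suc n))" unfolding qo_def by (rule WW_rec)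
  have split: "Q1 n + Q2 n = qo + qc" using qual_split[of n "(o1, o2)"] by (simp add: qo_def qc_def)
  have rew_o: "of_bool o1 * Q1 n + of_bool o2 * Q2 n = qo" by (simp add: qo_def qual_eq)
  have a_s: "a n = v * qc - PS" if "priceS p \<noteq> top" using that by (simp add: a_def a2_def qc_def PS_def)
  have Psi_n: "\<Psi> n (d', o1, o2) = of_bool d' * (v * WW (o1, o2) n + D n)" for d'
    by (simp add: \<Psi>_def Psi2_def dem_def T_def a_def)
  have PsiT: "\<Psi> (Suc n) (True, o1, o2) = v * WW (o1, o2) (Suc n) + D (Suc n)"
    by (simp add: \<Psi>_def Psi2_def dem_def)
  have PsiF: "\<Psi> (Suc n) (False, o1, o2) = 0" by (simp add: \<Psi>_def Psi2_def dem_def)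
  have Dn: "0 \<le> D (Suc n)" using D_nonneg mn by simp
  have geT: "\<not> enat n < T \<Longrightarrow> D (Suc n) = 0 \<and> D n = 0"
    using D_zero by (metis Suc_ile_eq linorder_not_less order.strict_implies_order T_def)
  have P4: "enat n < T \<Longrightarrow> (1 - \<delta>) * D (Suc n) \<le> a n" unfolding T_def a_def by (rule D_P4[OF mn])
  note defs = PsiT PsiF Psi_n pdx_def
  show "v * (of_bool d * (if s then Q1 n + Q2 n else of_bool (o1 \<or> False) * Q1 n + of_bool (o2 \<or> False) * Q2 n))
    - (of_bool s * enn2real (priceS p) + of_bool False * P1r + of_bool False * P2r)
    + (pdx d o1 o2 s False False * \<Psi> (Suc n) (True, o1 \<or> False, o2 \<or> False)
       + (1 - pdx d o1 o2 s False False) * \<Psi> (Suc n) (False, o1 \<or> False, o2 \<or> False))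
    \<le> \<Psi> n (d, o1, o2)"
  proof (cases d)
    case False
    then show ?thesis using PS0 by (simp add: defs PS_def[symmetric])
  next
    case True
    show ?thesis
    proof (cases s)
      case True
      then have "a n = v * qc - PS" using a_s hs by blast
      moreover have "v * qc - PS \<le> (if enat n < T then a n else 0)" using ch calculation by auto
      ultimately show ?thesis using \<open>d\<close> True Wr Drec split
        by (simp add: defs PS_def[symmetric] algebra_simps T_def a_def)
    next
      case False
      show ?thesis
      proof (cases "o1 \<or> o2")
        case True
        have "0 \<le> (if enat n < T then a n else 0)" using ch by auto
        then show ?thesis using \<open>d\<close> \<open>\<not> s\<close> True Wr Drec rew_o
          by (simp add: defs PS_def[symmetric] algebra_simps T_def a_def)
      next
        case False
        then have oo: "\<not> o1" "\<not> o2" by auto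
        have W0: "WW (o1, o2) k = 0" for k using oo WW_zero by simp
        have "D (Suc n) \<le> D n"
        proof (cases "enat n < T")
          case True then show ?thesis using P4 Drec by (simp add: algebra_simps)
        next
          case False then show ?thesis using geT by simp
        qed
        moreover have "pdx d o1 o2 s False False = 1" using \<open>d\<close> \<open>\<not> s\<close> oo by (simp add: pdx_def)
        moreover have "(if s then Q1 n + Q2 n else of_bool (o1 \<or> False) * Q1 n + of_bool (o2 \<or> False) * Q2 n) = 0"
          using \<open>\<not> s\<close> oo by simp
        moreover have "\<Psi> (Suc n) (True, o1, o2) = D (Suc n)" "\<Psi> n (d, o1, o2) = D n"
          using PsiT Psi_n W0 \<open>d\<close> by simp_all
        ultimately show ?thesis using \<open>\<not> s\<close> PsiF by simp
      qed
    qed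
  qed
  assume sdef: "s = (d \<and> enat n < n2 m q1 q2 p tau (o1, o2))"
  show "v * (of_bool d * (if s then Q1 n + Q2 n else of_bool (o1 \<or> False) * Q1 n + of_bool (o2 \<or> False) * Q2 n))
    - (of_bool s * enn2real (priceS p) + of_bool False * P1r + of_bool False * P2r)
    + (pdx d o1 o2 s False False * \<Psi> (Suc n) (True, o1 \<or> False, o2 \<or> False)
       + (1 - pdx d o1 o2 s False False) * \<Psi> (Suc n) (False, o1 \<or> False, o2 \<or> False))
    = \<Psi> n (d, o1, o2)"
  proof (cases d)
    case False
    then show ?thesis using sdef by (simp add: defs)
  next
    case True
    show ?thesis
    proof (cases "enat n < T")
      case True
      then have s: s using sdef \<open>d\<close> by (simp add: T_def)
      have "priceS p \<noteq> top"
      proof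
        assume "priceS p = top"
        then have "a n = -1" by (simp add: a_def a2_def)
        then show False using ch True by simp
      qed
      then have "a n = v * qc - PS" using a_s by blast
      then show ?thesis using \<open>d\<close> s True Wr Drec split
        by (simp add: defs PS_def[symmetric] algebra_simps T_def a_def)
    next
      case False
      then have s: "\<not> s" using sdef by (simp add: T_def)
      have z: "D (Suc n) = 0" "D n = 0" using geT False by auto
      show ?thesis
      proof (cases "o1 \<or> o2")
        case True
        then show ?thesis using \<open>d\<close> s z Wr rew_o
          by (simp add: defs algebra_simps T_def a_def)
      next
        case False
        then have oo: "\<not> o1" "\<not> o2" by auto
        have W0: "WW (o1, o2) k = 0" for k using oo WW_zero by simp
        have "pdx d o1 o2 s False False = 1" using \<open>d\<close> s oo by (simp add: pdx_def)
        moreover have "(if s then Q1 n + Q2 n else of_bool (o1 \<or> False) * Q1 n + of_bool (o2 \<or> False) * Q2 n) = 0"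
          using s oo by simp
        moreover have "\<Psi> (Suc n) (True, o1, o2) = D (Suc n)" "\<Psi> n (d, o1, o2) = D n"
          using PsiT Psi_n W0 \<open>d\<close> by simp_all
        ultimately show ?thesis using s PsiF z by simp
      qed
    qed
  qed
qed

end

context mdl begin

definition a2s :: "prices \<Rightarrow> bool \<times> bool \<Rightarrow> strategy" where
  "a2s p o' n \<sigma> = (dem \<sigma> \<and> enat n < n2 m q1 q2 p tau o', False, False)"

lemma part2:
  assumes ne: "class_nobuy m tau o' \<noteq> {}"
  shows "\<exists>\<alpha>. optimal_in (class_nobuy m tau o') (utility m q1 q2 p tau) \<alpha> \<and>
         (\<forall>n \<ge> m. \<forall>\<sigma>. rch \<alpha> n \<sigma> \<longrightarrow>
             (dem \<sigma> \<and> enat n < n2 m q1 q2 p tau o' \<longrightarrow> subs (\<alpha> n \<sigma>)) \<and>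
             (n2 m q1 q2 p tau o' \<le> enat n \<longrightarrow> \<not> subs (\<alpha> n \<sigma>)))"
proof -
  obtain o1 o2 where o': "o' = (o1, o2)" by (cases o')
  define T where "T = n2 m q1 q2 p tau o'"
  define sp where "sp = (\<lambda>\<beta>::strategy. (\<lambda>n. if n < MM then \<beta> n else a2s p o' n))"
  define C where "C = class_nobuy m tau o'"
  define u where "u = utility m q1 q2 p tau"
  define \<Psi> where "\<Psi> = Psi2 p o'"
  interpret thr m q1 q2 \<delta> \<gamma> v na "a2 p o'" "n2 m q1 q2 p tau o'" by (rule thr2)
  have naM: "na \<le> MM" "m \<le> MM" by (auto simp: MM_def)
  have agree: "\<And>\<beta> n \<sigma>. n < MM \<Longrightarrow> sp \<beta> n \<sigma> = \<beta> n \<sigma>" by (simp add: sp_def)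
  have post: "\<And>\<beta> n \<sigma>. MM \<le> n \<Longrightarrow> sp \<beta> n \<sigma> = a2s p o' n \<sigma>" by (simp add: sp_def)
  have dseq: "ds (sp \<beta>) k = ds \<beta> k" if "k \<le> MM - na" for \<beta> k
    by (rule dist_splice[of "MM - na"]) (use naM that in \<open>auto simp: sp_def\<close>)
  have rch_eq: "rch (sp \<beta>) MM \<sigma> \<longleftrightarrow> rch \<beta> MM \<sigma>" for \<beta> \<sigma>
    using dseq[of "MM - na" \<beta>] naM by (simp add: reach_iff)
  have rMM: "MM \<le> n" if "m \<le> n" "rch \<alpha> n \<sigma>" for \<alpha> n \<sigma>
    using that by (simp add: MM_def reach_iff)
  have clC: "own \<sigma> = o' \<and> \<not> buy1 (\<beta> n \<sigma>) \<and> \<not> buy2 (\<beta> n \<sigma>)" if "\<beta> \<in> C" "m \<le> n" "rch \<beta> n \<sigma>" for \<beta> n \<sigma>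
    using that unfolding C_def class_nobuy_def by blast
  have cl: "sp \<beta> \<in> C" if b: "\<beta> \<in> C" for \<beta>
  proof -
    have adm: "admissible m \<beta>" using b by (simp add: C_def class_nobuy_def)
    have "admissible m (sp \<beta>)" using adm naM by (auto simp: admissible_def sp_def)
    moreover have ownsp: "own \<sigma> = o'" if "MM \<le> n" "rch (sp \<beta>) n \<sigma>" for n \<sigma>
    proof (rule reach_inv_from[where P="\<lambda>n \<sigma>. own \<sigma> = o'" and \<alpha>="sp \<beta>" and N=MM])
      show "na \<le> MM" by (rule naM(1))
      show "own \<sigma> = o'" if "rch (sp \<beta>) MM \<sigma>" for \<sigma>
        using clC[OF b naM(2)] that rch_eq by blast
      show "own \<sigma>' = o'" if "MM \<le> n" "rch (sp \<beta>) n \<sigma>" "0 < tr n \<sigma> (sp \<beta> n \<sigma>) \<sigma>'" "own \<sigma> = o'" for n \<sigma> \<sigma>'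
        using trans_pos_own[OF that(3)] post[OF that(1)] that(4) by (simp add: a2s_def buy1_def buy2_def)
    qed (use that in auto)
    moreover have "\<forall>n\<ge>m. \<forall>\<sigma>. rch (sp \<beta>) n \<sigma> \<longrightarrow> own \<sigma> = o' \<and> \<not> buy1 (sp \<beta> n \<sigma>) \<and> \<not> buy2 (sp \<beta> n \<sigma>)"
    proof (intro allI impI)
      fix n \<sigma> assume h: "m \<le> n" "rch (sp \<beta>) n \<sigma>"
      then have "MM \<le> n" by (rule rMM)
      then show "own \<sigma> = o' \<and> \<not> buy1 (sp \<beta> n \<sigma>) \<and> \<not> buy2 (sp \<beta> n \<sigma>)"
        using ownsp[OF _ h(2)] post by (simp add: a2s_def buy1_def buy2_def)
    qed
    ultimately show ?thesis unfolding C_def class_nobuy_def by blast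
  qed
  have le: "u \<beta> \<le> u (sp \<beta>)" if bC: "\<beta> \<in> C" for \<beta>
  proof (cases "exp_payment m p tau \<beta> = top")
    case True then show ?thesis by (simp add: u_def utility_inf)
  next
    case False
    have spC: "sp \<beta> \<in> C" by (rule cl[OF bC])
    have fin\<beta>: "pay p \<beta> (na+k) \<sigma> \<noteq> top" if "0 < ds \<beta> k \<sigma>" for k \<sigma>
      using pay_fin_reach False that by blast
    have fin\<alpha>: "pay p (sp \<beta>) (na+k) \<sigma> \<noteq> top" if pos: "0 < ds (sp \<beta>) k \<sigma>" for k \<sigma>
    proof (cases "na + k < MM")
      case True
      then have "k \<le> MM - na" by simp
      then show ?thesis using pos dseq fin\<beta> agree[OF True] by simp
    next
      case False
      then have ge: "MM \<le> na + k" by simp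
      have "priceS p \<noteq> top" if "enat (na + k) < T"
      proof
        assume "priceS p = top"
        then have "a2 p o' (na+k) = -1" by (simp add: a2_def)
        then show False using n2_char[of "na+k" p o'] that ge naM T_def by simp
      qed
      then show ?thesis using post[OF ge]
        by (auto simp: a2s_def payment_def subs_def buy1_def buy2_def T_def)
    qed
    have B\<beta>: "Bel \<beta> (FF p \<beta>) \<Psi> (na+k) \<sigma> \<le> \<Psi> (na+k) \<sigma>" if "MM - na \<le> k" "0 < ds \<beta> k \<sigma>" for k \<sigma>
    proof -
      have mk: "m \<le> na + k" "MM \<le> na + k" using that naM by linarith+
      have r: "rch \<beta> (na+k) \<sigma>" using that(2) by (simp add: reach_iff)
      obtain s b1 b2 where a: "\<beta> (na+k) \<sigma> = (s, b1, b2)" by (cases "\<beta> (na+k) \<sigma>")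
      have cc: "own \<sigma> = (o1, o2)" "\<not> b1" "\<not> b2" using clC[OF bC mk(1) r] a o' by (auto simp: buy1_def buy2_def)
      obtain d x y where \<sigma>0: "\<sigma> = (d, x, y)" by (cases \<sigma>)
      then have \<sigma>: "\<sigma> = (d, o1, o2)" using cc by (simp add: own_def)
      have a': "\<beta> (na+k) (d, o1, o2) = (s, False, False)" using a cc \<sigma> by simp
      have pf: "payment m p (na+k) (s, False, False) \<noteq> top" using fin\<beta>[OF that(2)] a' \<sigma> by simp
      have hs: "s \<Longrightarrow> priceS p \<noteq> top" using pay_parts(1)[OF pf mk(1)] .
      show ?thesis
        unfolding \<sigma> Bel_expand[where \<beta>=\<beta> and \<Psi>=\<Psi>, OF mk(1) a' pf] unfolding \<Psi>_def o'
        by (rule bell2(1)[OF mk(1) hs])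
    qed
    have Psi_nonneg: "0 \<le> \<Psi> n \<sigma>" if "m \<le> n" for n \<sigma>
      using WW_nonneg[of o' n] D_nonneg[OF that] v0 by (simp add: \<Psi>_def Psi2_def)
    have ev\<beta>: "0 \<le> EE \<beta> \<Psi> k" if "MM - na \<le> k" for k
      by (rule EE_ge) (use that naM Psi_nonneg in auto)
    have B\<alpha>: "Bel (sp \<beta>) (FF p (sp \<beta>)) \<Psi> (na+k) \<sigma> = \<Psi> (na+k) \<sigma>" if "MM - na \<le> k" "0 < ds (sp \<beta>) k \<sigma>" for k \<sigma>
    proof -
      have mk: "m \<le> na + k" "MM \<le> na + k" using that naM by linarith+
      have r: "rch (sp \<beta>) (na+k) \<sigma>" using that(2) by (simp add: reach_iff)
      have "own \<sigma> = (o1, o2)" using clC[OF spC mk(1) r] o' by simp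
      moreover obtain d x y where "\<sigma> = (d, x, y)" by (cases \<sigma>)
      ultimately have \<sigma>: "\<sigma> = (d, o1, o2)" by (simp add: own_def)
      define s where "s = (d \<and> enat (na+k) < n2 m q1 q2 p tau (o1, o2))"
      have a': "sp \<beta> (na+k) (d, o1, o2) = (s, False, False)"
        using post[OF mk(2)] o' by (simp add: a2s_def s_def dem_def)
      have pf: "payment m p (na+k) (s, False, False) \<noteq> top" using fin\<alpha>[OF that(2)] a' \<sigma> by simp
      have hs: "s \<Longrightarrow> priceS p \<noteq> top" using pay_parts(1)[OF pf mk(1)] .
      show ?thesis
        unfolding \<sigma> Bel_expand[where \<beta>="sp \<beta>" and \<Psi>=\<Psi>, OF mk(1) a' pf] unfolding \<Psi>_def o'
        by (rule bell2(2)[OF mk(1) hs s_def])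
    qed
    define K where "K = v * Cq * \<gamma> ^ MM * (1 / (1 - \<delta> * \<gamma>) + 1 / (1 - \<delta>))"
    have Psi_le: "\<Psi> n \<sigma> \<le> K * \<gamma> ^ (n - MM)" if "MM \<le> n" for n \<sigma>
    proof -
      have mn: "m \<le> n" using that naM by simp
      have "D n \<le> max 0 (a2 p o' n) / (1 - \<delta>)" by (rule D_le[OF mn])
      also have "\<dots> \<le> v * Cq * \<gamma> ^ n / (1 - \<delta>)" using a2_le d1 by (simp add: divide_right_mono)
      finally have Dl: "D n \<le> v * Cq * \<gamma> ^ n / (1 - \<delta>)" .
      have "\<Psi> n \<sigma> \<le> v * WW o' n + D n"
        using WW_nonneg[of o' n] D_nonneg[OF mn] v0 by (simp add: \<Psi>_def Psi2_def)
      also have "\<dots> \<le> v * Cq * \<gamma> ^ n / (1 - \<delta> * \<gamma>) + v * Cq * \<gamma> ^ n / (1 - \<delta>)"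
        using WW_le[of o' n] Dl by linarith
      also have "\<dots> = K * \<gamma> ^ (n - MM)"
      proof -
        have "\<gamma> ^ n = \<gamma> ^ MM * \<gamma> ^ (n - MM)" using that by (simp add: power_add[symmetric])
        then show ?thesis by (simp add: K_def algebra_simps add_divide_distrib)
      qed
      finally show ?thesis .
    qed
    have lim\<alpha>: "(\<lambda>j. EE (sp \<beta>) \<Psi> (MM - na + j)) \<longlonglongrightarrow> 0"
    proof (rule tendsto_sandwich[where f="\<lambda>_. 0" and h="\<lambda>j. K * \<gamma> ^ j"])
      have e: "na + (MM - na + j) = MM + j" for j using naM by simp
      show "\<forall>\<^sub>F j in sequentially. 0 \<le> EE (sp \<beta>) \<Psi> (MM - na + j)"
      proof (intro always_eventually allI EE_ge)
        fix j \<sigma>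
        show "0 \<le> \<Psi> (na + (MM - na + j)) \<sigma>" using Psi_nonneg[of "MM + j" \<sigma>] e[of j] naM by simp
      qed
      show "\<forall>\<^sub>F j in sequentially. EE (sp \<beta>) \<Psi> (MM - na + j) \<le> K * \<gamma> ^ j"
      proof (intro always_eventually allI EE_le)
        fix j \<sigma>
        show "\<Psi> (na + (MM - na + j)) \<sigma> \<le> K * \<gamma> ^ j" using Psi_le[of "MM + j" \<sigma>] e[of j] by simp
      qed
      show "(\<lambda>_. 0) \<longlonglongrightarrow> (0::real)" by simp
      show "(\<lambda>j. K * \<gamma> ^ j) \<longlonglongrightarrow> 0"
        using g0 g1 by (intro tendsto_mult_right_zero LIMSEQ_power_zero) auto
    qed
    show ?thesis unfolding u_def
      by (rule compare[OF naM(1) agree False B\<beta> ev\<beta> fin\<alpha> B\<alpha> lim\<alpha>])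
  qed
  have "\<exists>\<beta>\<in>C. optimal_in C u (sp \<beta>)"
    using finite_max_splice[where C=C and u=u and ?\<alpha>0.0="a2s p o'" and M=MM] ne cl le
    unfolding sp_def C_def by blast
  then obtain \<beta>0 where b0: "\<beta>0 \<in> C" "optimal_in C u (sp \<beta>0)" by blast
  have shape: "(dem \<sigma> \<and> enat n < T \<longrightarrow> subs (sp \<beta>0 n \<sigma>)) \<and> (T \<le> enat n \<longrightarrow> \<not> subs (sp \<beta>0 n \<sigma>))"
    if "m \<le> n" "rch (sp \<beta>0) n \<sigma>" for n \<sigma>
    using post[OF rMM[OF that]] by (auto simp: a2s_def subs_def T_def)
  show ?thesis using b0 shape unfolding C_def u_def T_def by blast
qed

end

context mdl begin

definition n3 :: "prices \<Rightarrow> nat" where "n3 p = (LEAST n. cond3 m q1 q2 p tau n)"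

definition c3 :: "prices \<Rightarrow> nat \<Rightarrow> real" where
  "c3 p k = (if priceS p = top then -1 else v * Q2 k - enn2real (priceS p) + (1 - \<delta>) * enn2real (fst (snd p)))"

definition h3 :: "prices \<Rightarrow> nat \<Rightarrow> real" where
  "h3 p k = max 0 (c3 p k - (1 - \<delta>) * enn2real (fst (snd p)))"

lemma Q2_mono: "Q2 (Suc k) \<le> Q2 k"
  using Q2_pos[of k] g1 g0 by (simp add: Q2_Suc mult_left_le_one_le)

lemma c3_mono: "c3 p (Suc k) \<le> c3 p k"
  using Q2_mono[of k] v0 by (simp add: c3_def mult_left_mono)

lemma h3_mono: "h3 p (Suc k) \<le> h3 p k"
  using c3_mono[of p k] by (simp add: h3_def)

lemma cond3_iff:
  assumes ex: "\<exists>n. cond3 m q1 q2 p tau n"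
  shows "cond3 m q1 q2 p tau n \<longleftrightarrow> m \<le> n \<and> c3 p n < 0"
proof -
  have q: "qual m q1 q2 \<gamma> (False, True) n = Q2 n" by (simp add: qual_eq)
  have tq: "top / ennreal (Q2 n) = top" by (simp add: ennreal_divide_eq_top_iff)
  have d1': "0 < 1 - \<delta>" using d1 by simp
  show ?thesis
  proof (cases "fst (snd p) = top")
    case True
    then have mt: "ennreal (1 - \<delta>) * fst (snd p) = top" using d1' by (simp add: ennreal_mult_top)
    have "priceS p = top"
    proof (rule ccontr)
      assume "priceS p \<noteq> top"
      then have "priceS p - ennreal (1 - \<delta>) * fst (snd p) = 0" using mt by (simp add: minus_top_ennreal)
      then have "\<not> cond3 m q1 q2 p tau k" for k by (simp add: cond3_def)
      then show False using ex by blast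
    qed
    then show ?thesis by (simp add: cond3_def c3_def q tq)
  next
    case False
    then obtain P1 where P1: "fst (snd p) = ennreal P1" "0 \<le> P1" by (cases "fst (snd p)") auto
    show ?thesis
    proof (cases "priceS p = top")
      case True
      then show ?thesis by (simp add: cond3_def c3_def q tq)
    next
      case False
      then obtain PS where PS: "priceS p = ennreal PS" "0 \<le> PS" by (cases "priceS p") auto
      have e: "ennreal PS - ennreal (1 - \<delta>) * ennreal P1 = ennreal (PS - (1 - \<delta>) * P1)"
        using PS P1 d1' by (simp add: ennreal_mult[symmetric] ennreal_minus)
      have "ennreal v < ennreal (PS - (1 - \<delta>) * P1) / ennreal (Q2 n) \<longleftrightarrow> v * Q2 n < enn2real (ennreal (PS - (1 - \<delta>) * P1))"
        using ennreal_crit[OF v0 less_imp_le[OF Q2_pos[of n]], of "ennreal (PS - (1 - \<delta>) * P1)"] by simp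
      also have "\<dots> \<longleftrightarrow> v * Q2 n < PS - (1 - \<delta>) * P1"
      proof (cases "0 \<le> PS - (1 - \<delta>) * P1")
        case False
        then have "ennreal (PS - (1 - \<delta>) * P1) = 0" by (simp add: ennreal_neg)
        moreover have "0 \<le> v * Q2 n" using v0 Q2_pos[of n] by simp
        ultimately show ?thesis using False by simp
      qed simp
      finally have "ennreal v < ennreal (PS - (1 - \<delta>) * P1) / ennreal (Q2 n) \<longleftrightarrow> c3 p n < 0"
        using PS P1 False by (auto simp: c3_def)
      then show ?thesis using PS P1 by (simp add: cond3_def q e)
    qed
  qed
qed

lemma n3_char:
  assumes ex: "\<exists>n. cond3 m q1 q2 p tau n" and k: "m \<le> k"
  shows "k < n3 p \<longleftrightarrow> 0 \<le> c3 p k"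
proof -
  have "enat k < (if \<exists>n. cond3 m q1 q2 p tau n then enat (LEAST n. cond3 m q1 q2 p tau n) else \<infinity>) \<longleftrightarrow> 0 \<le> c3 p k"
    by (rule threshold_char[OF cond3_iff[OF ex] c3_mono k])
  then show ?thesis using ex by (simp add: n3_def)
qed

lemma n3_ge: "\<exists>n. cond3 m q1 q2 p tau n \<Longrightarrow> m \<le> n3 p"
  unfolding n3_def by (metis LeastI_ex cond3_def)

lemma thr_c3: "\<exists>n. cond3 m q1 q2 p tau n \<Longrightarrow> thr m q1 q2 \<delta> \<gamma> v (c3 p) (enat (n3 p))"
  by unfold_locales (auto simp: n3_char c3_mono)

lemma thr_h3: "thr m q1 q2 \<delta> \<gamma> v (h3 p) (enat (n3 p))"
proof unfold_locales
  fix k show "h3 p (Suc k) \<le> h3 p k" by (rule h3_mono)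
qed (simp add: h3_def)

definition Psi3 :: "prices \<Rightarrow> nat \<Rightarrow> state \<Rightarrow> real" where
  "Psi3 p n \<sigma> = (if dem \<sigma> then (if fst (own \<sigma>) then v * WW (True, False) n + DD (h3 p) (enat (n3 p)) n
      else v * WW (True, False) n - enn2real (fst (snd p)) + DD (c3 p) (enat (n3 p)) n) else 0)"

end

context mdl begin

lemma bell3:
  fixes d o1 s b1 :: bool
  assumes ex: "\<exists>n. cond3 m q1 q2 p tau n" and mn: "m \<le> n" and hs: "s \<Longrightarrow> priceS p \<noteq> top"
  defines "\<Psi> \<equiv> Psi3 p"
  shows "v * (of_bool d * (if s then Q1 n + Q2 n else of_bool (o1 \<or> b1) * Q1 n + of_bool (False \<or> False) * Q2 n))
    - (of_bool s * enn2real (priceS p) + of_bool b1 * enn2real (fst (snd p)) + of_bool False * P2r)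
    + (pdx d o1 False s b1 False * \<Psi> (Suc n) (True, o1 \<or> b1, False \<or> False)
       + (1 - pdx d o1 False s b1 False) * \<Psi> (Suc n) (False, o1 \<or> b1, False \<or> False))
    \<le> \<Psi> n (d, o1, False)"
    and "s = (d \<and> n < n3 p) \<Longrightarrow> b1 = (d \<and> \<not> n < n3 p \<and> \<not> o1) \<Longrightarrow> (d \<and> o1 \<Longrightarrow> n3 p < n) \<Longrightarrow>
    v * (of_bool d * (if s then Q1 n + Q2 n else of_bool (o1 \<or> b1) * Q1 n + of_bool (False \<or> False) * Q2 n))
    - (of_bool s * enn2real (priceS p) + of_bool b1 * enn2real (fst (snd p)) + of_bool False * P2r)
    + (pdx d o1 False s b1 False * \<Psi> (Suc n) (True, o1 \<or> b1, False \<or> False)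
       + (1 - pdx d o1 False s b1 False) * \<Psi> (Suc n) (False, o1 \<or> b1, False \<or> False))
    = \<Psi> n (d, o1, False)"
proof -
  interpret C: thr m q1 q2 \<delta> \<gamma> v na "c3 p" "enat (n3 p)" by (rule thr_c3[OF ex])
  interpret H: thr m q1 q2 \<delta> \<gamma> v na "h3 p" "enat (n3 p)" by (rule thr_h3)
  define N3 where "N3 = n3 p"
  define c where "c = c3 p n"
  define h where "h = h3 p n"
  define D where "D = C.D n"
  define D' where "D' = C.D (Suc n)"
  define Hn where "Hn = H.D n"
  define H' where "H' = H.D (Suc n)"
  define G where "G = v * WW (True, False) n"
  define G' where "G' = v * WW (True, False) (Suc n)"
  define P1 where "P1 = enn2real (fst (snd p))"
  define PS where "PS = enn2real (priceS p)"
  have lt: "enat n < enat N3 \<longleftrightarrow> n < N3" by simp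
  have Gr: "G = v * Q1 n + \<delta> * G'" unfolding G_def G'_def using WW_rec[of "(True, False)" n] by (simp add: qual_eq)
  have Gm: "G' \<le> G"
  proof -
    have "WW (True, False) (Suc n) = \<gamma> * WW (True, False) n" by (simp add: WW_def qual_Suc)
    moreover have "\<gamma> * WW (True, False) n \<le> WW (True, False) n" using WW_nonneg g1 g0 by (simp add: mult_left_le_one_le)
    ultimately show ?thesis unfolding G_def G'_def using v0 by (simp add: mult_left_mono)
  qed
  have Drec: "D = (if n < N3 then c else 0) + \<delta> * D'"
    unfolding D_def D'_def c_def N3_def using C.D_rec[OF mn] by simp
  have Hrec: "Hn = (if n < N3 then h else 0) + \<delta> * H'"
    unfolding Hn_def H'_def h_def N3_def using H.D_rec[OF mn] by simp
  have ch: "n < N3 \<longleftrightarrow> 0 \<le> c" unfolding N3_def c_def by (rule n3_char[OF ex mn])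
  have cs: "priceS p \<noteq> top \<Longrightarrow> c = v * Q2 n - PS + (1 - \<delta>) * P1" by (simp add: c_def c3_def PS_def P1_def)
  have hdef: "h = max 0 (c - (1 - \<delta>) * P1)" by (simp add: h_def h3_def c_def P1_def)
  have P10: "0 \<le> P1" "0 \<le> PS" by (simp_all add: P1_def PS_def)
  have d1': "0 \<le> 1 - \<delta>" using d1 by simp
  have dP: "0 \<le> (1 - \<delta>) * P1" using d1' P10 by simp
  have HD: "H' \<le> D'" unfolding H'_def D'_def
  proof (rule C.DD_mono')
    fix k assume "m \<le> k" "enat k < enat (n3 p)"
    then have "0 \<le> c3 p k" using n3_char[OF ex] by simp
    then show "0 \<le> h3 p k \<and> h3 p k \<le> c3 p k" using P10 d1' by (simp add: h3_def P1_def)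
  qed (use mn in simp)
  have Dd: "D' \<le> D" unfolding D'_def D_def by (rule C.D_dec[OF mn])
  have nn: "0 \<le> D'" "0 \<le> H'" "0 \<le> Hn" "0 \<le> D" using C.D_nonneg H.D_nonneg mn
    by (simp_all add: D'_def H'_def Hn_def D_def)
  have zero: "\<not> n < N3 \<Longrightarrow> D = 0 \<and> D' = 0 \<and> Hn = 0 \<and> H' = 0"
    using C.D_zero H.D_zero unfolding D_def D'_def Hn_def H'_def N3_def by (simp add: not_less)
  have G'nn: "0 \<le> G'" using WW_nonneg v0 by (simp add: G'_def)
  have dH: "\<delta> * H' \<le> \<delta> * D'" using HD d0 by simp
  have dD: "\<delta> * D' \<le> D" using Drec ch by auto
  have dH2: "\<delta> * H' \<le> Hn" using Hrec hdef by auto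
  have PT1: "\<Psi> (Suc n) (True, True, False) = G' + H'"
    by (simp add: \<Psi>_def Psi3_def dem_def own_def G'_def H'_def)
  have PT0: "\<Psi> (Suc n) (True, False, False) = G' - P1 + D'"
    by (simp add: \<Psi>_def Psi3_def dem_def own_def G'_def D'_def P1_def)
  have PF: "\<Psi> (Suc n) (False, x, y) = 0" for x y by (simp add: \<Psi>_def Psi3_def dem_def)
  have Pn: "\<Psi> n (d', o', False) = (if d' then (if o' then G + Hn else G - P1 + D) else 0)" for d' o'
    by (simp add: \<Psi>_def Psi3_def dem_def own_def G_def Hn_def D_def P1_def)
  note facts = Gr Gm Drec Hrec ch hdef P10 HD Dd nn zero G'nn dH dD dH2
  show "v * (of_bool d * (if s then Q1 n + Q2 n else of_bool (o1 \<or> b1) * Q1 n + of_bool (False \<or> False) * Q2 n))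
    - (of_bool s * enn2real (priceS p) + of_bool b1 * enn2real (fst (snd p)) + of_bool False * P2r)
    + (pdx d o1 False s b1 False * \<Psi> (Suc n) (True, o1 \<or> b1, False \<or> False)
       + (1 - pdx d o1 False s b1 False) * \<Psi> (Suc n) (False, o1 \<or> b1, False \<or> False))
    \<le> \<Psi> n (d, o1, False)"
  proof (cases d)
    case False
    then show ?thesis using P10 by (simp add: pdx_def PF Pn PS_def[symmetric] P1_def[symmetric])
  next
    case True
    note d = True
    show ?thesis
    proof (cases o1)
      case True
      show ?thesis
      proof (cases s)
        case True
        have "c = v * Q2 n - PS + (1 - \<delta>) * P1" using cs hs True by blast
        moreover have "c - (1 - \<delta>) * P1 \<le> (if n < N3 then h else 0)"
          using ch hdef dP by auto
        ultimately show ?thesis using d \<open>o1\<close> True Gr Hrec P10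
          by (auto simp: pdx_def PT1 PF Pn PS_def[symmetric] P1_def[symmetric] algebra_simps)
      next
        case False
        then show ?thesis using d \<open>o1\<close> Gr dH2 P10
          by (auto simp: pdx_def PT1 PF Pn PS_def[symmetric] P1_def[symmetric] algebra_simps)
      qed
    next
      case False
      note o1 = False
      show ?thesis
      proof (cases s)
        case True
        have cc: "c = v * Q2 n - PS + (1 - \<delta>) * P1" using cs hs True by blast
        show ?thesis
        proof (cases b1)
          case True
          have "c - (1 - \<delta>) * P1 + \<delta> * H' \<le> D"
          proof (cases "n < N3")
            case True then show ?thesis using Drec dH dP by simp
          next
            case False then show ?thesis using zero ch dP by simp
          qed
          then show ?thesis using d o1 \<open>s\<close> True Gr cc
            by (auto simp: pdx_def PT1 PF Pn PS_def[symmetric] P1_def[symmetric] algebra_simps)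
        next
          case False
          have "c + \<delta> * D' \<le> D" using Drec ch by auto
          then show ?thesis using d o1 \<open>s\<close> False Gr cc
            by (auto simp: pdx_def PT0 PF Pn PS_def[symmetric] P1_def[symmetric] algebra_simps)
        qed
      next
        case False
        note ns = False
        show ?thesis
        proof (cases b1)
          case True
          then show ?thesis using d o1 ns Gr dH dD
            by (auto simp: pdx_def PT1 PF Pn PS_def[symmetric] P1_def[symmetric] algebra_simps)
        next
          case False
          then show ?thesis using d o1 ns Gm Dd
            by (auto simp: pdx_def PT0 PF Pn PS_def[symmetric] P1_def[symmetric] algebra_simps)
        qed
      qed
    qed
  qed
  assume sdef: "s = (d \<and> n < n3 p)" and bdef: "b1 = (d \<and> \<not> n < n3 p \<and> \<not> o1)" and inv: "d \<and> o1 \<Longrightarrow> n3 p < n"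
  show "v * (of_bool d * (if s then Q1 n + Q2 n else of_bool (o1 \<or> b1) * Q1 n + of_bool (False \<or> False) * Q2 n))
    - (of_bool s * enn2real (priceS p) + of_bool b1 * enn2real (fst (snd p)) + of_bool False * P2r)
    + (pdx d o1 False s b1 False * \<Psi> (Suc n) (True, o1 \<or> b1, False \<or> False)
       + (1 - pdx d o1 False s b1 False) * \<Psi> (Suc n) (False, o1 \<or> b1, False \<or> False))
    = \<Psi> n (d, o1, False)"
  proof (cases d)
    case False
    then have "\<not> s" "\<not> b1" using sdef bdef by auto
    then show ?thesis using False by (simp add: pdx_def PF Pn)
  next
    case True
    note d = True
    show ?thesis
    proof (cases o1)
      case True
      then have "\<not> n < N3" using inv d N3_def by simp
      moreover have "\<not> s" "\<not> b1" using sdef bdef True calculation N3_def by auto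
      ultimately show ?thesis using d True zero Gr
        by (simp add: pdx_def PT1 PF Pn algebra_simps)
    next
      case False
      note o1 = False
      show ?thesis
      proof (cases "n < N3")
        case True
        then have s: s and nb: "\<not> b1" using sdef bdef d N3_def by auto
        have "priceS p \<noteq> top"
        proof
          assume "priceS p = top"
          then have "c = -1" by (simp add: c_def c3_def)
          then show False using ch True by simp
        qed
        then have "c = v * Q2 n - PS + (1 - \<delta>) * P1" using cs by blast
        then show ?thesis using d o1 s nb True Gr Drec
          by (auto simp: pdx_def PT0 PF Pn PS_def[symmetric] P1_def[symmetric] algebra_simps)
      next
        case False
        then have ns: "\<not> s" and b: b1 using sdef bdef d o1 N3_def by auto
        then show ?thesis using d o1 False zero Gr
          by (auto simp: pdx_def PT1 PF Pn PS_def[symmetric] P1_def[symmetric] algebra_simps)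
      qed
    qed
  qed
qed

end

context mdl begin

definition a3s :: "prices \<Rightarrow> strategy" where
  "a3s p n \<sigma> = (if dem \<sigma> then (if n < n3 p then (True, False, False) else (False, \<not> fst (own \<sigma>), False))
                 else (False, False, False))"

lemma reach_fwd:
  assumes r: "rch \<alpha> n \<sigma>" and P: "P \<sigma>" and nn: "n \<le> n'"
    and step: "\<And>k \<sigma>. n \<le> k \<Longrightarrow> rch \<alpha> k \<sigma> \<Longrightarrow> P \<sigma> \<Longrightarrow> \<exists>\<sigma>'. P \<sigma>' \<and> 0 < tr k \<sigma> (\<alpha> k \<sigma>) \<sigma>'"
  shows "\<exists>\<sigma>'. rch \<alpha> n' \<sigma>' \<and> P \<sigma>'"
  using nn
proof (induction n')
  case 0 then show ?case using r P by blast
next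
  case (Suc n')
  show ?case
  proof (cases "n = Suc n'")
    case True then show ?thesis using r P by blast
  next
    case False
    then have nn': "n \<le> n'" using Suc.prems by simp
    then obtain \<sigma>1 where s1: "rch \<alpha> n' \<sigma>1" "P \<sigma>1" using Suc.IH by blast
    then obtain \<sigma>' where "P \<sigma>'" "0 < tr n' \<sigma>1 (\<alpha> n' \<sigma>1) \<sigma>'" using step nn' by blast
    then show ?thesis using reach_next s1(1) by blast
  qed
qed

lemma dem_MM: "\<exists>\<sigma>. rch \<alpha> MM \<sigma> \<and> dem \<sigma>"
proof (cases "m \<le> na")
  case True
  then have "MM = na" by (simp add: MM_def)
  then show ?thesis using reach_init by (auto simp: dem_def)
next
  case False
  then have M: "MM = m" "Suc (m - 1) = m" "na \<le> m - 1" by (auto simp: MM_def)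
  obtain \<sigma>0 where r0: "rch \<alpha> (m - 1) \<sigma>0" using reach_ex M(3) by blast
  let ?\<sigma> = "(True, fst (own \<sigma>0) \<or> buy1 (\<alpha> (m-1) \<sigma>0), snd (own \<sigma>0) \<or> buy2 (\<alpha> (m-1) \<sigma>0))"
  have "0 < tr (m - 1) \<sigma>0 (\<alpha> (m-1) \<sigma>0) ?\<sigma>" by (rule trans_pos_succ) (use M in simp)
  then have "rch \<alpha> (Suc (m - 1)) ?\<sigma>" by (rule reach_next[OF r0])
  then show ?thesis using M by (auto simp: dem_def)
qed

lemma own2_base:
  assumes "\<beta> \<in> class_base m tau" "rch \<beta> n \<sigma>"
  shows "\<not> snd (own \<sigma>)"
proof -
  have adm: "admissible m \<beta>" and nb: "\<And>n \<sigma>. m \<le> n \<Longrightarrow> rch \<beta> n \<sigma> \<Longrightarrow> \<not> buy2 (\<beta> n \<sigma>)"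
    using assms(1) unfolding class_base_def by auto
  have s: "\<not> snd (own \<sigma>')" if "rch \<beta> n \<sigma>" "0 < tr n \<sigma> (\<beta> n \<sigma>) \<sigma>'" "\<not> snd (own \<sigma>)" for n \<sigma> \<sigma>'
  proof -
    have "\<not> buy2 (\<beta> n \<sigma>)"
    proof (cases "n < m")
      case True then show ?thesis using adm unfolding admissible_def by blast
    next
      case False then show ?thesis using nb that(1) by simp
    qed
    then show ?thesis using trans_pos_own[OF that(2)] that(3) by simp
  qed
  show ?thesis
  proof (rule reach_inv[where P="\<lambda>n \<sigma>. \<not> snd (own \<sigma>)" and \<alpha>=\<beta>])
    show "\<not> snd (own (True, False, False))" by (simp add: own_def)
    show "\<And>n \<sigma> \<sigma>'. rch \<beta> n \<sigma> \<Longrightarrow> 0 < tr n \<sigma> (\<beta> n \<sigma>) \<sigma>' \<Longrightarrow> \<not> snd (own \<sigma>) \<Longrightarrow> \<not> snd (own \<sigma>')"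
      by (rule s)
    show "rch \<beta> n \<sigma>" by (rule assms(2))
  qed
qed


lemma part3:
  assumes ex: "\<exists>n. cond3 m q1 q2 p tau n"
  shows "\<exists>\<alpha>. optimal_in (class_base m tau) (utility m q1 q2 p tau) \<alpha> \<and>
         (let n3 = (LEAST n. cond3 m q1 q2 p tau n) in
           (\<forall>n \<ge> m. \<forall>\<sigma>. rch \<alpha> n \<sigma> \<longrightarrow> (subs (\<alpha> n \<sigma>) \<longleftrightarrow> n < n3 \<and> dem \<sigma>)) \<and>
           (\<forall>\<sigma>. rch \<alpha> n3 \<sigma> \<longrightarrow> dem \<sigma> \<longrightarrow> buy1 (\<alpha> n3 \<sigma>)))"
proof -
  interpret C: thr m q1 q2 \<delta> \<gamma> v na "c3 p" "enat (n3 p)" by (rule thr_c3[OF ex])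
  interpret H: thr m q1 q2 \<delta> \<gamma> v na "h3 p" "enat (n3 p)" by (rule thr_h3)
  define N3 where "N3 = n3 p"
  have N3m: "m \<le> N3" using n3_ge[OF ex] by (simp add: N3_def)
  define sp where "sp = (\<lambda>\<beta>::strategy. (\<lambda>n. if n < MM then \<beta> n else a3s p n))"
  define C where "C = class_base m tau"
  define u where "u = utility m q1 q2 p tau"
  define \<Psi> where "\<Psi> = Psi3 p"
  have naM: "na \<le> MM" "m \<le> MM" by (auto simp: MM_def)
  have agree: "\<And>\<beta> n \<sigma>. n < MM \<Longrightarrow> sp \<beta> n \<sigma> = \<beta> n \<sigma>" by (simp add: sp_def)
  have post: "\<And>\<beta> n \<sigma>. MM \<le> n \<Longrightarrow> sp \<beta> n \<sigma> = a3s p n \<sigma>" by (simp add: sp_def)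
  have dseq: "ds (sp \<beta>) k = ds \<beta> k" if "k \<le> MM - na" for \<beta> k
    by (rule dist_splice[of "MM - na"]) (use naM that in \<open>auto simp: sp_def\<close>)
  have rch_eq: "rch (sp \<beta>) MM \<sigma> \<longleftrightarrow> rch \<beta> MM \<sigma>" for \<beta> \<sigma>
    using dseq[of "MM - na" \<beta>] naM by (simp add: reach_iff)
  have rMM: "MM \<le> n" if "m \<le> n" "rch \<alpha> n \<sigma>" for \<alpha> n \<sigma>
    using that by (simp add: MM_def reach_iff)
  have cC: "admissible m \<beta>" "\<And>n \<sigma>. m \<le> n \<Longrightarrow> rch \<beta> n \<sigma> \<Longrightarrow> \<not> buy2 (\<beta> n \<sigma>)"
      "\<And>\<sigma>. rch \<beta> MM \<sigma> \<Longrightarrow> \<not> fst (own \<sigma>)"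
      "\<exists>N\<ge>na. \<forall>\<sigma>. rch \<beta> N \<sigma> \<longrightarrow> dem \<sigma> \<longrightarrow> fst (own \<sigma>)" if "\<beta> \<in> C" for \<beta>
    using that unfolding C_def class_base_def MM_def by auto
  have own_after: "fst (own \<sigma>)" if h1: "max MM N3 < n" and h2: "rch (sp \<beta>) n \<sigma>" and h3: "dem \<sigma>" for \<beta> n \<sigma>
  proof -
    define n' where "n' = n - 1"
    have n: "n = Suc n'" "max MM N3 \<le> n'" using h1 by (auto simp: n'_def)
    then have "na \<le> n'" using naM by simp
    then obtain \<sigma>0 where r0: "rch (sp \<beta>) n' \<sigma>0" and t: "0 < tr n' \<sigma>0 (sp \<beta> n' \<sigma>0) \<sigma>"
      using reach_step h2 n by blast
    have sm: "Suc n' \<noteq> m" using n naM by simp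
    have d0': "dem \<sigma>0" using trans_pos_dem[OF t sm] h3 by blast
    have "sp \<beta> n' \<sigma>0 = (False, \<not> fst (own \<sigma>0), False)"
      using post[of n'] n d0' by (simp add: a3s_def N3_def)
    then show ?thesis using trans_pos_own[OF t] by (simp add: buy1_def)
  qed
  have cl: "sp \<beta> \<in> C" if bC: "\<beta> \<in> C" for \<beta>
  proof -
    have "admissible m (sp \<beta>)" using cC(1)[OF bC] naM by (auto simp: admissible_def sp_def)
    moreover have "\<forall>n\<ge>m. \<forall>\<sigma>. rch (sp \<beta>) n \<sigma> \<longrightarrow> \<not> buy2 (sp \<beta> n \<sigma>)"
      using rMM post by (auto simp: a3s_def buy2_def)
    moreover have "\<forall>\<sigma>. rch (sp \<beta>) (max (arr tau) m) \<sigma> \<longrightarrow> \<not> fst (own \<sigma>)"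
      using cC(3)[OF bC] rch_eq by (simp add: MM_def)
    moreover have "\<exists>N\<ge>arr tau. \<forall>\<sigma>. rch (sp \<beta>) N \<sigma> \<longrightarrow> dem \<sigma> \<longrightarrow> fst (own \<sigma>)"
    proof (intro exI[of _ "Suc (max MM N3)"] conjI allI impI)
      show "arr tau \<le> Suc (max MM N3)" using naM by simp
      fix \<sigma> assume "rch (sp \<beta>) (Suc (max MM N3)) \<sigma>" "dem \<sigma>"
      then show "fst (own \<sigma>)" using own_after[of "Suc (max MM N3)"] by simp
    qed
    ultimately show ?thesis unfolding C_def class_base_def by blast
  qed
  have inv_lt: "N3 < n" if bC: "\<beta> \<in> C" and h: "MM \<le> n" "rch (sp \<beta>) n \<sigma>" "fst (own \<sigma>)" for \<beta> n \<sigma>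
  proof -
    have "fst (own \<sigma>) \<longrightarrow> N3 < n"
    proof (rule reach_inv_from[where P="\<lambda>n \<sigma>. fst (own \<sigma>) \<longrightarrow> N3 < n" and \<alpha>="sp \<beta>" and N=MM])
      show "na \<le> MM" by (rule naM(1))
      show "fst (own \<sigma>) \<longrightarrow> N3 < MM" if "rch (sp \<beta>) MM \<sigma>" for \<sigma>
        using cC(3)[OF bC] that rch_eq by blast
      show "fst (own \<sigma>') \<longrightarrow> N3 < Suc n"
        if "MM \<le> n" "rch (sp \<beta>) n \<sigma>" "0 < tr n \<sigma> (sp \<beta> n \<sigma>) \<sigma>'" "fst (own \<sigma>) \<longrightarrow> N3 < n" for n \<sigma> \<sigma>'
        using trans_pos_own[OF that(3)] post[OF that(1)] that(4)
        by (auto simp: a3s_def buy1_def N3_def split: if_splits)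
    qed (use h in auto)
    then show ?thesis using h by blast
  qed
  have le: "u \<beta> \<le> u (sp \<beta>)" if bC: "\<beta> \<in> C" for \<beta>
  proof (cases "exp_payment m p tau \<beta> = top")
    case True then show ?thesis by (simp add: u_def utility_inf)
  next
    case False
    have spC: "sp \<beta> \<in> C" by (rule cl[OF bC])
    have fin\<beta>: "pay p \<beta> (na+k) \<sigma> \<noteq> top" if "0 < ds \<beta> k \<sigma>" for k \<sigma>
      using pay_fin_reach False that by blast
    have fin\<beta>': "payment m p n (\<beta> n \<sigma>) \<noteq> top" if "rch \<beta> n \<sigma>" for n \<sigma>
      using fin\<beta>[of "n - na" \<sigma>] that by (simp add: reach_iff)
    obtain N0 where N0: "na \<le> N0" "\<And>\<sigma>. rch \<beta> N0 \<sigma> \<Longrightarrow> dem \<sigma> \<Longrightarrow> fst (own \<sigma>)"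
      using cC(4)[OF bC] by blast
    have N0ge: "MM \<le> N0"
    proof (rule ccontr)
      assume "\<not> MM \<le> N0"
      then have lt: "N0 < MM" by simp
      have "\<exists>\<sigma>'. rch \<beta> N0 \<sigma>' \<and> dem \<sigma>'"
      proof (rule reach_fwd[where P=dem and n=na and \<sigma>="(True, False, False)"])
        show "rch \<beta> na (True, False, False)" by (simp add: reach_init)
        show "dem (True, False, False)" by (simp add: dem_def)
        show "na \<le> N0" by (rule N0(1))
        fix k \<sigma> assume "na \<le> k" "rch \<beta> k \<sigma>" "dem \<sigma>"
        then show "\<exists>\<sigma>'. dem \<sigma>' \<and> 0 < tr k \<sigma> (\<beta> k \<sigma>) \<sigma>'"
          using trans_pos_succ[of \<sigma> k "\<beta> k \<sigma>"]
          by (intro exI[of _ "(True, fst (own \<sigma>) \<or> buy1 (\<beta> k \<sigma>), snd (own \<sigma>) \<or> buy2 (\<beta> k \<sigma>))"]) (auto simp: dem_def)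
      qed
      then obtain \<sigma>1 where s1: "rch \<beta> N0 \<sigma>1" "fst (own \<sigma>1)" using N0(2) by blast
      have "\<exists>\<sigma>'. rch \<beta> MM \<sigma>' \<and> fst (own \<sigma>')"
      proof (rule reach_fwd[where P="\<lambda>\<sigma>. fst (own \<sigma>)", OF s1])
        show "N0 \<le> MM" using lt by simp
        fix k \<sigma> assume "N0 \<le> k" "rch \<beta> k \<sigma>" "fst (own \<sigma>)"
        moreover obtain \<sigma>2 where t: "0 < tr k \<sigma> (\<beta> k \<sigma>) \<sigma>2" using succ_ex by blast
        ultimately show "\<exists>\<sigma>'. fst (own \<sigma>') \<and> 0 < tr k \<sigma> (\<beta> k \<sigma>) \<sigma>'"
          using trans_pos_own[OF t] by (intro exI[of _ \<sigma>2]) simp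
      qed
      then show False using cC(3)[OF bC] by blast
    qed
    have persist: "dem \<sigma> \<longrightarrow> fst (own \<sigma>)" if "N0 \<le> n" "rch \<beta> n \<sigma>" for n \<sigma>
    proof (rule reach_inv_from[where P="\<lambda>n \<sigma>. dem \<sigma> \<longrightarrow> fst (own \<sigma>)" and \<alpha>=\<beta> and N=N0])
      show "na \<le> N0" by (rule N0(1))
      show "dem \<sigma> \<longrightarrow> fst (own \<sigma>)" if "rch \<beta> N0 \<sigma>" for \<sigma> using N0(2) that by blast
      show "dem \<sigma>' \<longrightarrow> fst (own \<sigma>')"
        if h: "N0 \<le> n" "rch \<beta> n \<sigma>" "0 < tr n \<sigma> (\<beta> n \<sigma>) \<sigma>'" "dem \<sigma> \<longrightarrow> fst (own \<sigma>)" for n \<sigma> \<sigma>'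
      proof
        assume "dem \<sigma>'"
        moreover have "Suc n \<noteq> m" using h(1) N0ge naM by simp
        ultimately have "dem \<sigma>" using trans_pos_dem[OF h(3)] by blast
        then show "fst (own \<sigma>')" using h(4) trans_pos_own[OF h(3)] by simp
      qed
    qed (use that in auto)
    have p1fin: "fst (snd p) \<noteq> top"
    proof -
      obtain \<sigma>0 where s0: "rch \<beta> MM \<sigma>0" "dem \<sigma>0" using dem_MM by blast
      have "\<not> fst (own \<sigma>0)" using cC(3)[OF bC s0(1)] .
      have "\<exists>n' \<sigma>'. MM \<le> n' \<and> n' < N0 \<and> rch \<beta> n' \<sigma>' \<and> (dem \<sigma>' \<and> \<not> fst (own \<sigma>')) \<and> buy1 (\<beta> n' \<sigma>')"
      proof (rule path_fix[where bad="\<lambda>\<sigma>. dem \<sigma> \<and> \<not> fst (own \<sigma>)" and fx="\<lambda>n a. buy1 a"])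
        show "rch \<beta> MM \<sigma>0" by (rule s0(1))
        show "dem \<sigma>0 \<and> \<not> fst (own \<sigma>0)" using s0(2) \<open>\<not> fst (own \<sigma>0)\<close> by simp
        show "\<not> (dem \<sigma>' \<and> \<not> fst (own \<sigma>'))" if "rch \<beta> N0 \<sigma>'" for \<sigma>' using N0(2) that by blast
        show "MM \<le> N0" by (rule N0ge)
        fix n \<sigma> assume h: "rch \<beta> n \<sigma>" "dem \<sigma> \<and> \<not> fst (own \<sigma>)" "\<not> buy1 (\<beta> n \<sigma>)"
        let ?s = "(True, fst (own \<sigma>) \<or> buy1 (\<beta> n \<sigma>), snd (own \<sigma>) \<or> buy2 (\<beta> n \<sigma>))"
        have "0 < tr n \<sigma> (\<beta> n \<sigma>) ?s" by (rule trans_pos_succ) (use h in simp)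
        then show "\<exists>\<sigma>'. (dem \<sigma>' \<and> \<not> fst (own \<sigma>')) \<and> 0 < tr n \<sigma> (\<beta> n \<sigma>) \<sigma>'"
          using h by (intro exI[of _ ?s]) (simp add: dem_def own_def)
      qed
      then obtain n' \<sigma>' where n': "MM \<le> n'" "rch \<beta> n' \<sigma>'" "buy1 (\<beta> n' \<sigma>')" by blast
      obtain s b1 b2 where a: "\<beta> n' \<sigma>' = (s, b1, b2)" by (cases "\<beta> n' \<sigma>'")
      have "payment m p n' (s, b1, b2) \<noteq> top" "m \<le> n'" "b1"
        using fin\<beta>'[OF n'(2)] a n' naM by (auto simp: buy1_def)
      then show ?thesis using pay_parts by blast
    qed
    have fin\<alpha>: "pay p (sp \<beta>) (na+k) \<sigma> \<noteq> top" if pos: "0 < ds (sp \<beta>) k \<sigma>" for k \<sigma>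
    proof (cases "na + k < MM")
      case True
      then have "k \<le> MM - na" by simp
      then show ?thesis using pos dseq fin\<beta> agree[OF True] by simp
    next
      case False
      then have ge: "MM \<le> na + k" by simp
      have mk: "m \<le> na + k" using ge naM by simp
      have "priceS p \<noteq> top" if "na + k < N3"
      proof
        assume "priceS p = top"
        then have "c3 p (na+k) = -1" by (simp add: c3_def)
        then show False using n3_char[OF ex mk] that N3_def by simp
      qed
      then show ?thesis using post[OF ge] p1fin mk
        by (auto simp: a3s_def payment_def subs_def buy1_def buy2_def price1_def N3_def)
    qed
    have B\<beta>: "Bel \<beta> (FF p \<beta>) \<Psi> (na+k) \<sigma> \<le> \<Psi> (na+k) \<sigma>" if "MM - na \<le> k" "0 < ds \<beta> k \<sigma>" for k \<sigma>
    proof -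
      have mk: "m \<le> na + k" "MM \<le> na + k" using that naM by linarith+
      have r: "rch \<beta> (na+k) \<sigma>" using that(2) by (simp add: reach_iff)
      obtain s b1 b2 where a: "\<beta> (na+k) \<sigma> = (s, b1, b2)" by (cases "\<beta> (na+k) \<sigma>")
      have nb2: "\<not> b2" using cC(2)[OF bC mk(1) r] a by (simp add: buy2_def)
      have no2: "\<not> snd (own \<sigma>)" by (rule own2_base[OF bC[unfolded C_def] r])
      obtain d o1 x where "\<sigma> = (d, o1, x)" by (cases \<sigma>)
      then have \<sigma>: "\<sigma> = (d, o1, False)" using no2 by (simp add: own_def)
      have a': "\<beta> (na+k) (d, o1, False) = (s, b1, False)" using a nb2 \<sigma> by simp
      have pf: "payment m p (na+k) (s, b1, False) \<noteq> top" using fin\<beta>[OF that(2)] a' \<sigma> by simp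
      have hs: "s \<Longrightarrow> priceS p \<noteq> top" using pay_parts(1)[OF pf mk(1)] .
      show ?thesis
        unfolding \<sigma> Bel_expand[where \<beta>=\<beta> and \<Psi>=\<Psi>, OF mk(1) a' pf] unfolding \<Psi>_def
        by (rule bell3(1)[OF ex mk(1) hs])
    qed
    have ev\<beta>: "0 \<le> EE \<beta> \<Psi> k" if "N0 - na \<le> k" for k
    proof (rule EE_ge)
      fix \<sigma> assume "0 < ds \<beta> k \<sigma>"
      then have r: "rch \<beta> (na+k) \<sigma>" by (simp add: reach_iff)
      have nk: "N0 \<le> na + k" "m \<le> na + k" using that N0(1) N0ge naM by linarith+
      show "0 \<le> \<Psi> (na+k) \<sigma>"
      proof (cases "dem \<sigma>")
        case True
        then have "fst (own \<sigma>)" using persist[OF nk(1) r] by simp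
        then show ?thesis using True WW_nonneg[of "(True, False)" "na+k"] H.D_nonneg[OF nk(2)] v0
          by (simp add: \<Psi>_def Psi3_def)
      qed (simp add: \<Psi>_def Psi3_def)
    qed
    have B\<alpha>: "Bel (sp \<beta>) (FF p (sp \<beta>)) \<Psi> (na+k) \<sigma> = \<Psi> (na+k) \<sigma>" if "MM - na \<le> k" "0 < ds (sp \<beta>) k \<sigma>" for k \<sigma>
    proof -
      have mk: "m \<le> na + k" "MM \<le> na + k" using that naM by linarith+
      have r: "rch (sp \<beta>) (na+k) \<sigma>" using that(2) by (simp add: reach_iff)
      have no2: "\<not> snd (own \<sigma>)" by (rule own2_base[OF spC[unfolded C_def] r])
      obtain d o1 x where "\<sigma> = (d, o1, x)" by (cases \<sigma>)
      then have \<sigma>: "\<sigma> = (d, o1, False)" using no2 by (simp add: own_def)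
      define s where "s = (d \<and> na + k < n3 p)"
      define b1 where "b1 = (d \<and> \<not> na + k < n3 p \<and> \<not> o1)"
      have a': "sp \<beta> (na+k) (d, o1, False) = (s, b1, False)"
        using post[OF mk(2)] by (simp add: a3s_def s_def b1_def dem_def own_def)
      have pf: "payment m p (na+k) (s, b1, False) \<noteq> top" using fin\<alpha>[OF that(2)] a' \<sigma> by simp
      have hs: "s \<Longrightarrow> priceS p \<noteq> top" using pay_parts(1)[OF pf mk(1)] .
      have inv: "d \<and> o1 \<Longrightarrow> n3 p < na + k"
        using inv_lt[OF bC mk(2) r] \<sigma> by (simp add: own_def N3_def)
      show ?thesis
        unfolding \<sigma> Bel_expand[where \<beta>="sp \<beta>" and \<Psi>=\<Psi>, OF mk(1) a' pf] unfolding \<Psi>_def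
        by (rule bell3(2)[OF ex mk(1) hs s_def b1_def inv])
    qed
    define K where "K = v * Cq * \<gamma> ^ MM / (1 - \<delta> * \<gamma>)"
    have lim\<alpha>: "(\<lambda>j. EE (sp \<beta>) \<Psi> (MM - na + j)) \<longlonglongrightarrow> 0"
    proof (rule tendsto_sandwich[where f="\<lambda>_. 0" and h="\<lambda>j. K * \<gamma> ^ j"])
      have e: "na + (MM - na + j) = MM + j" for j using naM by simp
      have bnd: "0 \<le> \<Psi> (MM + j) \<sigma> \<and> \<Psi> (MM + j) \<sigma> \<le> K * \<gamma> ^ j"
        if "Suc N3 \<le> j" "rch (sp \<beta>) (MM + j) \<sigma>" for j \<sigma>
      proof -
        have gt: "max MM N3 < MM + j" using that(1) by simp
        have mj: "m \<le> MM + j" using naM by simp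
        have z: "H.D (MM + j) = 0" using H.D_zero[of "MM + j"] that(1) by (simp add: N3_def)
        have w: "v * WW (True, False) (MM + j) \<le> K * \<gamma> ^ j"
          using WW_le[of "(True, False)" "MM + j"] by (simp add: K_def power_add algebra_simps)
        show ?thesis
        proof (cases "dem \<sigma>")
          case True
          then have "fst (own \<sigma>)" using own_after[OF gt that(2)] by simp
          then show ?thesis using True z w WW_nonneg[of "(True, False)" "MM + j"] v0
            by (simp add: \<Psi>_def Psi3_def)
        next
          case False
          have "0 \<le> K * \<gamma> ^ j" using w WW_nonneg[of "(True, False)" "MM + j"] v0
            by (meson mult_nonneg_nonneg order_trans)
          then show ?thesis using False by (simp add: \<Psi>_def Psi3_def)
        qed
      qed
      show "\<forall>\<^sub>F j in sequentially. 0 \<le> EE (sp \<beta>) \<Psi> (MM - na + j)"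
      proof (rule eventually_sequentiallyI[of "Suc N3"])
        fix j assume j: "Suc N3 \<le> j"
        show "0 \<le> EE (sp \<beta>) \<Psi> (MM - na + j)"
        proof (rule EE_ge)
          fix \<sigma> assume "0 < ds (sp \<beta>) (MM - na + j) \<sigma>"
          then have "rch (sp \<beta>) (MM + j) \<sigma>" using e[of j] by (simp add: reach_iff)
          then show "0 \<le> \<Psi> (na + (MM - na + j)) \<sigma>" using bnd[OF j] e[of j] by simp
        qed
      qed
      show "\<forall>\<^sub>F j in sequentially. EE (sp \<beta>) \<Psi> (MM - na + j) \<le> K * \<gamma> ^ j"
      proof (rule eventually_sequentiallyI[of "Suc N3"])
        fix j assume j: "Suc N3 \<le> j"
        show "EE (sp \<beta>) \<Psi> (MM - na + j) \<le> K * \<gamma> ^ j"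
        proof (rule EE_le)
          fix \<sigma> assume "0 < ds (sp \<beta>) (MM - na + j) \<sigma>"
          then have "rch (sp \<beta>) (MM + j) \<sigma>" using e[of j] by (simp add: reach_iff)
          then show "\<Psi> (na + (MM - na + j)) \<sigma> \<le> K * \<gamma> ^ j" using bnd[OF j] e[of j] by simp
        qed
      qed
      show "(\<lambda>_. 0) \<longlonglongrightarrow> (0::real)" by simp
      show "(\<lambda>j. K * \<gamma> ^ j) \<longlonglongrightarrow> 0"
        using g0 g1 by (intro tendsto_mult_right_zero LIMSEQ_power_zero) auto
    qed
    show ?thesis unfolding u_def
      by (rule compare[OF naM(1) agree False B\<beta> ev\<beta> fin\<alpha> B\<alpha> lim\<alpha>])
  qed
  have ne: "C \<noteq> {}"
  proof -
    define z where "z = (\<lambda>(n::nat) (\<sigma>::state). (False, False, False))"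
    have noz: "\<not> fst (own \<sigma>)" if "rch z n \<sigma>" for n \<sigma>
    proof (rule reach_inv[where P="\<lambda>n \<sigma>. \<not> fst (own \<sigma>)" and \<alpha>=z])
      show "\<not> fst (own (True, False, False))" by (simp add: own_def)
      show "\<And>n \<sigma> \<sigma>'. rch z n \<sigma> \<Longrightarrow> 0 < tr n \<sigma> (z n \<sigma>) \<sigma>' \<Longrightarrow> \<not> fst (own \<sigma>) \<Longrightarrow> \<not> fst (own \<sigma>')"
        using trans_pos_own by (simp add: z_def buy1_def)
    qed (rule that)
    have dz: "ds (sp z) (MM - na) = ds z (MM - na)" by (rule dseq) simp
    have "sp z \<in> C"
    proof -
      have "admissible m (sp z)" using naM by (auto simp: admissible_def sp_def z_def buy2_def)
      moreover have "\<forall>n\<ge>m. \<forall>\<sigma>. rch (sp z) n \<sigma> \<longrightarrow> \<not> buy2 (sp z n \<sigma>)"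
        using rMM post by (auto simp: a3s_def buy2_def)
      moreover have "\<forall>\<sigma>. rch (sp z) (max (arr tau) m) \<sigma> \<longrightarrow> \<not> fst (own \<sigma>)"
      proof (intro allI impI)
        fix \<sigma> assume "rch (sp z) (max (arr tau) m) \<sigma>"
        then have "rch z MM \<sigma>" using dz naM by (simp add: reach_iff MM_def)
        then show "\<not> fst (own \<sigma>)" by (rule noz)
      qed
      moreover have "\<exists>N\<ge>arr tau. \<forall>\<sigma>. rch (sp z) N \<sigma> \<longrightarrow> dem \<sigma> \<longrightarrow> fst (own \<sigma>)"
      proof (intro exI[of _ "Suc (max MM N3)"] conjI allI impI)
        show "arr tau \<le> Suc (max MM N3)" using naM by simp
        fix \<sigma> assume "rch (sp z) (Suc (max MM N3)) \<sigma>" "dem \<sigma>"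
        then show "fst (own \<sigma>)" using own_after[of "Suc (max MM N3)"] by simp
      qed
      ultimately show ?thesis unfolding C_def class_base_def by blast
    qed
    then show ?thesis by blast
  qed
  have "\<exists>\<beta>\<in>C. optimal_in C u (sp \<beta>)"
    using finite_max_splice[where C=C and u=u and ?\<alpha>0.0="a3s p" and M=MM] ne cl le
    unfolding sp_def by blast
  then obtain \<beta>0 where b0: "\<beta>0 \<in> C" "optimal_in C u (sp \<beta>0)" by blast
  have shape1: "subs (sp \<beta>0 n \<sigma>) \<longleftrightarrow> n < N3 \<and> dem \<sigma>" if "m \<le> n" "rch (sp \<beta>0) n \<sigma>" for n \<sigma>
    using post[OF rMM[OF that]] by (auto simp: a3s_def subs_def N3_def)
  have shape2: "buy1 (sp \<beta>0 N3 \<sigma>)" if "rch (sp \<beta>0) N3 \<sigma>" "dem \<sigma>" for \<sigma>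
  proof -
    have M: "MM \<le> N3" by (rule rMM[OF N3m that(1)])
    have "\<not> fst (own \<sigma>)" using inv_lt[OF b0(1) M that(1)] by auto
    then show ?thesis using post[OF M] that(2) by (simp add: a3s_def buy1_def N3_def)
  qed
  have N3L: "(LEAST n. cond3 m q1 q2 p tau n) = N3" by (simp add: N3_def n3_def)
  show ?thesis unfolding Let_def N3L using b0 shape1 shape2 unfolding C_def u_def by blast
qed

end

theorem lemma2:
  fixes m nmax :: nat and q1 q2 vmax :: real and p :: prices
    and na :: nat and \<delta> \<gamma> v :: real and \<tau> :: utype
  assumes "1 \<le> m" and "1 \<le> nmax" and "0 < q1" and "0 < q2" and "0 < vmax"
    and "1 \<le> na" and "na \<le> nmax" and "0 < \<delta>" and "\<delta> < 1" and "0 < \<gamma>" and "\<gamma> < 1"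
    and "0 \<le> v" and "v \<le> vmax"
    and \<tau>: "\<tau> = (na, \<delta>, \<gamma>, v)"
  shows
    "(\<exists>\<alpha>. optimal_in (class_upgrade m \<tau>) (utility m q1 q2 p \<tau>) \<alpha> \<and>
         (\<forall>\<sigma>. reach m \<tau> \<alpha> (max na m) \<sigma> \<longrightarrow>
             buy2 (\<alpha> (max na m) \<sigma>) \<and> (fst (own \<sigma>) \<or> buy1 (\<alpha> (max na m) \<sigma>))) \<and>
         (\<forall>n \<ge> m. \<forall>\<sigma>. reach m \<tau> \<alpha> n \<sigma> \<longrightarrow> \<not> subs (\<alpha> n \<sigma>)))
   \<and> (\<forall>o'. class_nobuy m \<tau> o' \<noteq> {} \<longrightarrow>
       (\<exists>\<alpha>. optimal_in (class_nobuy m \<tau> o') (utility m q1 q2 p \<tau>) \<alpha> \<and>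
         (\<forall>n \<ge> m. \<forall>\<sigma>. reach m \<tau> \<alpha> n \<sigma> \<longrightarrow>
             (dem \<sigma> \<and> enat n < n2 m q1 q2 p \<tau> o' \<longrightarrow> subs (\<alpha> n \<sigma>)) \<and>
             (n2 m q1 q2 p \<tau> o' \<le> enat n \<longrightarrow> \<not> subs (\<alpha> n \<sigma>)))))
   \<and> ((\<exists>n. cond3 m q1 q2 p \<tau> n) \<longrightarrow>
       (\<exists>\<alpha>. optimal_in (class_base m \<tau>) (utility m q1 q2 p \<tau>) \<alpha> \<and>
         (let n3 = (LEAST n. cond3 m q1 q2 p \<tau> n) in
           (\<forall>n \<ge> m. \<forall>\<sigma>. reach m \<tau> \<alpha> n \<sigma> \<longrightarrow>
               (subs (\<alpha> n \<sigma>) \<longleftrightarrow> n < n3 \<and> dem \<sigma>)) \<and>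
           (\<forall>\<sigma>. reach m \<tau> \<alpha> n3 \<sigma> \<longrightarrow> dem \<sigma> \<longrightarrow> buy1 (\<alpha> n3 \<sigma>)))))"
proof -
  interpret mdl m q1 q2 \<delta> \<gamma> v na
    by unfold_locales (use assms in auto)
  show ?thesis unfolding \<tau> using part1[of p] part2[of _ p] part3[of p] by blast
qed


end
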